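(* Let $r\ge2$ and let $F$ be an $r$-critical graph with $f$ vertices. There exists a constant $\zeta_F$ such that the following holds for all $\delta>0$ and all $n>n_0(\delta,F)$. Let $(n'_1,\dots,n'_r)$ be nonnegative integers with $\sum_i n'_i=n$, $|n'_i-n'_j|\le1$ for all $i,j$, and $c(n'_1,\dots,n'_r;F)=c(n,F)$. Let $n_1+\dots+n_r=n$ be nonnegative integers, $a_i=n_i-n'_i$ and $M=\max\{|a_i|: i\in[r]\}$. If $M<\delta n$, then \[ c(n,F)-c(n_1,\dots,n_r;F)=\zeta_F a_1 n^{f-3}+O(M^2n^{f-4}),\] where the implied constant depends only on $F$.
   Context: A graph $F$ is $r$-critical if $\chi(F)=r+1$ and $F$ contains an edge $e$ with $\chi(F-e)=r$. For disjoint sets $V_1,\dots,V_r$ with $|V_i|=n_i$, $K(V_1,\dots,V_r)$ denotes the complete $r$-partite graph with these parts, and $c(n_1,\dots,n_r;F)$ is the number of subgraphs isomorphic to $F$ in the graph obtained from $K(V_1,\dots,V_r)$ by adding one edge inside $V_1$. $c(n,F)$ is the minimum number of subgraphs isomorphic to $F$ in a graph obtained from the Turán graph $T_r(n)$ (complete $r$-partite graph on $n$ vertices with parts of sizes $\lfloor n/r\rfloor$ or $\lceil n/r\rceil$) by adding one edge. *)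

theory Defs
  imports Complex_Main
begin

definition is_graph :: "'v set \<Rightarrow> 'v set set \<Rightarrow> bool" where
  "is_graph V E \<longleftrightarrow> finite V \<and> (\<forall>e\<in>E. \<exists>u v. u \<in> V \<and> v \<in> V \<and> u \<noteq> v \<and> e = {u, v})"

definition colorable :: "'v set \<Rightarrow> 'v set set \<Rightarrow> nat \<Rightarrow> bool" where
  "colorable V E k \<longleftrightarrow> (\<exists>c :: 'v \<Rightarrow> nat. (\<forall>v\<in>V. c v < k) \<and>
      (\<forall>u v. {u, v} \<in> E \<and> u \<noteq> v \<longrightarrow> c u \<noteq> c v))"

definition chromatic_number :: "'v set \<Rightarrow> 'v set set \<Rightarrow> nat" where
  "chromatic_number V E = (LEAST k. colorable V E k)"

definition r_critical :: "nat \<Rightarrow> 'v set \<Rightarrow> 'v set set \<Rightarrow> bool" where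
  "r_critical r V E \<longleftrightarrow> chromatic_number V E = r + 1 \<and>
      (\<exists>e\<in>E. chromatic_number V (E - {e}) = r)"

definition sub_count :: "'v set \<Rightarrow> 'v set set \<Rightarrow> 'f set \<Rightarrow> 'f set set \<Rightarrow> nat" where
  "sub_count V E VF EF = card {(W, E'). W \<subseteq> V \<and> E' \<subseteq> E \<and>
      (\<exists>\<phi>. bij_betw \<phi> VF W \<and> E' = (\<lambda>e. \<phi> ` e) ` EF)}"

text \<open>Complete r-partite graph K(V_1,...,V_r) with |V_i| = ns (i-1) (parts indexed 0..r-1,
  part V_1 has index 0), plus one edge inside V_1.\<close>
definition part_vertices :: "nat \<Rightarrow> (nat \<Rightarrow> nat) \<Rightarrow> (nat \<times> nat) set" where
  "part_vertices r ns = {(i, j). i < r \<and> j < ns i}"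

definition part_edges_plus :: "nat \<Rightarrow> (nat \<Rightarrow> nat) \<Rightarrow> (nat \<times> nat) set set" where
  "part_edges_plus r ns =
     {{x, y} | x y. x \<in> part_vertices r ns \<and> y \<in> part_vertices r ns \<and> fst x \<noteq> fst y}
     \<union> (if ns 0 \<ge> 2 then {{(0, 0), (0, 1)}} else {})"

definition c_part :: "nat \<Rightarrow> (nat \<Rightarrow> nat) \<Rightarrow> 'f set \<Rightarrow> 'f set set \<Rightarrow> nat" where
  "c_part r ns VF EF = sub_count (part_vertices r ns) (part_edges_plus r ns) VF EF"

text \<open>Turan graph T_r(n) on {0..<n}: parts are residue classes mod r (sizes floor/ceil of n/r).\<close>
definition turan_edges :: "nat \<Rightarrow> nat \<Rightarrow> nat set set" where
  "turan_edges r n = {{u, v} | u v. u < n \<and> v < n \<and> u mod r \<noteq> v mod r}"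

definition c_turan :: "nat \<Rightarrow> nat \<Rightarrow> 'f set \<Rightarrow> 'f set set \<Rightarrow> nat" where
  "c_turan r n VF EF = Min {sub_count {..<n} (insert {u, v} (turan_edges r n)) VF EF | u v.
       u < n \<and> v < n \<and> u \<noteq> v \<and> {u, v} \<notin> turan_edges r n}"

end

theory Submission
  imports Defs "HOL-Library.FuncSet"
begin

lemma aux_A:
  fixes u G H :: real and \<gamma> :: "'a \<Rightarrow> real"
  assumes "finite I" "u > 0" "H \<ge> 1" "G \<ge> 0"
    and "\<forall>i\<in>I. \<bar>\<gamma> i\<bar> \<le> G \<and> \<bar>u + \<gamma> i\<bar> \<le> H*u"
  shows "\<bar>(\<Prod>i\<in>I. u + \<gamma> i) - u^card I\<bar> * u \<le> card I * G * H^card I * u^card I"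
  using assms(1,5)
proof (induction I rule: finite_induct)
  case empty then show ?case by simp
next
  case (insert x F)
  let ?P = "\<Prod>i\<in>F. u + \<gamma> i"
  let ?n = "card F"
  have IH: "\<bar>?P - u^?n\<bar> * u \<le> ?n * G * H^?n * u^?n" using insert by auto
  have gx: "\<bar>\<gamma> x\<bar> \<le> G" "\<bar>u + \<gamma> x\<bar> \<le> H*u" using insert by auto
  have eq: "(\<Prod>i\<in>insert x F. u + \<gamma> i) - u^card (insert x F) = (u + \<gamma> x) * (?P - u^?n) + \<gamma> x * u^?n"
    using insert by (simp add: algebra_simps)
  have "\<bar>(u + \<gamma> x) * (?P - u^?n) + \<gamma> x * u^?n\<bar> * u \<le> \<bar>u + \<gamma> x\<bar> * (\<bar>?P - u^?n\<bar> * u) + \<bar>\<gamma> x\<bar> * u^(Suc ?n)"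
  proof -
    have "\<bar>(u + \<gamma> x) * (?P - u^?n) + \<gamma> x * u^?n\<bar> \<le> \<bar>u + \<gamma> x\<bar> * \<bar>?P - u^?n\<bar> + \<bar>\<gamma> x\<bar> * u^?n"
      using \<open>u>0\<close> by (metis abs_mult abs_triangle_ineq abs_of_pos zero_less_power)
    then have "\<bar>(u + \<gamma> x) * (?P - u^?n) + \<gamma> x * u^?n\<bar> * u \<le> (\<bar>u + \<gamma> x\<bar> * \<bar>?P - u^?n\<bar> + \<bar>\<gamma> x\<bar> * u^?n) * u"
      using \<open>u>0\<close> by (intro mult_right_mono) auto
    then show ?thesis by (simp add: algebra_simps)
  qed
  also have "\<dots> \<le> (H*u) * (?n * G * H^?n * u^?n) + G * (H^Suc ?n * u^(Suc ?n))"
  proof (rule add_mono)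
    show "\<bar>u + \<gamma> x\<bar> * (\<bar>?P - u^?n\<bar> * u) \<le> (H*u) * (?n * G * H^?n * u^?n)"
      using gx IH \<open>u>0\<close> \<open>H\<ge>1\<close> by (intro mult_mono[OF gx(2) IH]) auto
    have "u^Suc ?n \<le> H^Suc ?n * u^Suc ?n"
      using mult_right_mono[OF one_le_power[OF \<open>H\<ge>1\<close>, of "Suc ?n"], of "u^Suc ?n"] \<open>u>0\<close> by simp
    then show "\<bar>\<gamma> x\<bar> * u^(Suc ?n) \<le> G * (H^Suc ?n * u^(Suc ?n))"
      using gx \<open>G\<ge>0\<close> \<open>u>0\<close> by (intro mult_mono[OF gx(1)]) auto
  qed
  also have "\<dots> = card (insert x F) * G * H^card (insert x F) * u^card (insert x F)"
    using insert by (simp add: algebra_simps)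
  finally show ?case using eq by simp
qed

lemma key_prod:
  fixes B K :: real
  assumes B0: "B \<ge> 0" and K0: "K \<ge> 0"
  shows "\<exists>C\<ge>0. \<forall>(I::'a set) \<beta> \<alpha> u M. finite I \<and> card I = d \<and> u \<ge> 1 \<and> M \<ge> 1 \<and> M \<le> K*u \<and>
     (\<forall>i\<in>I. \<bar>\<beta> i\<bar> \<le> B \<and> \<bar>\<alpha> i\<bar> \<le> M) \<longrightarrow>
     \<bar>(\<Prod>i\<in>I. u + \<beta> i + \<alpha> i) - (\<Prod>i\<in>I. u + \<beta> i) - u^(d-1) * (\<Sum>i\<in>I. \<alpha> i)\<bar> * u^2
       \<le> C * M^2 * u^d"
proof (induction d)
  case 0
  show ?case by (rule exI[of _ 0]) auto
next
  case (Suc d)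
  then obtain C where C0: "C \<ge> 0" and CH: "\<forall>(I::'a set) \<beta> \<alpha> u M. finite I \<and> card I = d \<and> u \<ge> 1 \<and> M \<ge> 1 \<and> M \<le> K*u \<and>
     (\<forall>i\<in>I. \<bar>\<beta> i\<bar> \<le> B \<and> \<bar>\<alpha> i\<bar> \<le> M) \<longrightarrow>
     \<bar>(\<Prod>i\<in>I. u + \<beta> i + \<alpha> i) - (\<Prod>i\<in>I. u + \<beta> i) - u^(d-1) * (\<Sum>i\<in>I. \<alpha> i)\<bar> * u^2
       \<le> C * M^2 * u^d" by blast
  define H where "H = 1 + B + K"
  have H1: "H \<ge> 1" using B0 K0 by (simp add: H_def)
  define C' where "C' = (1+B)*C + B*d + d*(B+1)*H^d"
  have C'0: "C' \<ge> 0" using B0 C0 H1 by (simp add: C'_def)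
  show ?case
  proof (rule exI[of _ C'], intro conjI allI impI)
    show "C' \<ge> 0" by (rule C'0)
    fix I :: "'a set" and \<beta> \<alpha> :: "'a \<Rightarrow> real" and u M :: real
    assume A: "finite I \<and> card I = Suc d \<and> u \<ge> 1 \<and> M \<ge> 1 \<and> M \<le> K*u \<and> (\<forall>i\<in>I. \<bar>\<beta> i\<bar> \<le> B \<and> \<bar>\<alpha> i\<bar> \<le> M)"
    then have fI: "finite I" and cI: "card I = Suc d" and u1: "u \<ge> 1" and M1: "M \<ge> 1" and MK: "M \<le> K*u"
      and bd: "\<forall>i\<in>I. \<bar>\<beta> i\<bar> \<le> B \<and> \<bar>\<alpha> i\<bar> \<le> M" by auto
    from cI obtain x F where IxF: "I = insert x F" and xF: "x \<notin> F" and cF: "card F = d"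
      by (auto simp: card_Suc_eq)
    have fF: "finite F" using fI IxF by simp
    define P' where "P' = (\<Prod>i\<in>F. u + \<beta> i + \<alpha> i)"
    define P where "P = (\<Prod>i\<in>F. u + \<beta> i)"
    define S where "S = (\<Sum>i\<in>F. \<alpha> i)"
    have bdF: "\<forall>i\<in>F. \<bar>\<beta> i\<bar> \<le> B \<and> \<bar>\<alpha> i\<bar> \<le> M" using bd IxF by auto
    have bx: "\<bar>\<beta> x\<bar> \<le> B" and ax: "\<bar>\<alpha> x\<bar> \<le> M" using bd IxF by auto
    have IH: "\<bar>P' - P - u^(d-1) * S\<bar> * u^2 \<le> C * M^2 * u^d"
      using CH fF cF u1 M1 MK bdF unfolding P'_def P_def S_def by blast
    have Sd: "u * u^(d-1) * S = u^d * S"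
    proof (cases d)
      case 0 then have "F = {}" using cF fF by simp
      then show ?thesis by (simp add: S_def)
    next
      case (Suc e) then show ?thesis by simp
    qed
    have Sb: "\<bar>S\<bar> \<le> d * M"
    proof -
      have "\<bar>S\<bar> \<le> (\<Sum>i\<in>F. \<bar>\<alpha> i\<bar>)" unfolding S_def by (rule sum_abs)
      also have "\<dots> \<le> (\<Sum>i\<in>F. M)" using bdF by (intro sum_mono) auto
      finally show ?thesis using cF by simp
    qed
    have T2: "\<bar>\<beta> x * u^(d-1) * S\<bar> * u^2 \<le> B * d * M^2 * u^(Suc d)"
    proof (cases d)
      case 0 then have "F = {}" using cF fF by simp
      then show ?thesis using B0 u1 by (simp add: S_def)
    next
      case (Suc e)
      have "\<bar>\<beta> x * u^(d-1) * S\<bar> * u^2 = \<bar>\<beta> x\<bar> * \<bar>S\<bar> * u^(Suc d)"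
        using Suc u1 by (simp add: abs_mult power2_eq_square)
      also have "\<dots> \<le> B * (d * M) * u^(Suc d)"
        using bx Sb B0 u1 by (intro mult_right_mono mult_mono) auto
      also have "\<dots> \<le> B * d * M^2 * u^(Suc d)"
      proof -
        have "M \<le> M^2" using M1 by (simp add: power2_eq_square)
        then have "B * d * M \<le> B * d * M^2" using B0 by (intro mult_left_mono) auto
        then have "B * d * M * u^(Suc d) \<le> B * d * M^2 * u^(Suc d)" using u1 by (intro mult_right_mono) auto
        then show ?thesis by (simp add: algebra_simps)
      qed
      finally show ?thesis .
    qed
    have T3: "\<bar>\<alpha> x * (P' - u^d)\<bar> * u^2 \<le> d * (B+1) * H^d * M^2 * u^(Suc d)"
    proof -
      have aA: "\<bar>(\<Prod>i\<in>F. u + (\<beta> i + \<alpha> i)) - u^card F\<bar> * u \<le> card F * (B+M) * H^card F * u^card F"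
      proof (rule aux_A[OF fF])
        show "u > 0" using u1 by simp
        show "H \<ge> 1" by (rule H1)
        show "B + M \<ge> 0" using B0 M1 by simp
        show "\<forall>i\<in>F. \<bar>\<beta> i + \<alpha> i\<bar> \<le> B + M \<and> \<bar>u + (\<beta> i + \<alpha> i)\<bar> \<le> H * u"
        proof
          fix i assume "i \<in> F"
          then have b: "\<bar>\<beta> i\<bar> \<le> B" and a: "\<bar>\<alpha> i\<bar> \<le> M" using bdF by auto
          have Bu: "B \<le> B * u" using B0 u1 by (simp add: mult_le_cancel_left1)
          have t1: "\<bar>\<beta> i + \<alpha> i\<bar> \<le> B + M" using a b abs_triangle_ineq[of "\<beta> i" "\<alpha> i"] by linarith
          have t2: "\<bar>u + (\<beta> i + \<alpha> i)\<bar> \<le> u + \<bar>\<beta> i + \<alpha> i\<bar>" using u1 abs_triangle_ineq[of u "\<beta> i + \<alpha> i"] by simp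
          have Hu: "H * u = u + B * u + K * u" unfolding H_def by (simp add: algebra_simps)
          show "\<bar>\<beta> i + \<alpha> i\<bar> \<le> B + M \<and> \<bar>u + (\<beta> i + \<alpha> i)\<bar> \<le> H * u"
            using t1 t2 Hu Bu MK by linarith
        qed
      qed
      have P'eq: "P' = (\<Prod>i\<in>F. u + (\<beta> i + \<alpha> i))" unfolding P'_def by (simp add: add.assoc)
      have "\<bar>\<alpha> x * (P' - u^d)\<bar> * u^2 = \<bar>\<alpha> x\<bar> * (\<bar>P' - u^d\<bar> * u) * u"
        by (simp add: abs_mult power2_eq_square)
      also have "\<dots> \<le> M * (d * (B+M) * H^d * u^d) * u"
      proof -
        have "\<bar>P' - u^d\<bar> * u \<le> d * (B+M) * H^d * u^d" using aA P'eq cF by simp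
        then have "\<bar>\<alpha> x\<bar> * (\<bar>P' - u^d\<bar> * u) \<le> M * (d * (B+M) * H^d * u^d)"
          using M1 u1 by (intro mult_mono[OF ax]) auto
        then show ?thesis using u1 by (intro mult_right_mono) auto
      qed
      also have "\<dots> = d * H^d * u^(Suc d) * (M * (B+M))" by (simp add: algebra_simps)
      also have "\<dots> \<le> d * H^d * u^(Suc d) * ((B+1) * M^2)"
      proof -
        have "B * M \<le> B * (M * M)" using M1 B0 by (intro mult_left_mono) (auto simp: mult_le_cancel_left1)
        then have "M * (B+M) \<le> (B+1) * M^2"
          by (simp add: power2_eq_square algebra_simps)
        then show ?thesis using H1 u1 by (intro mult_left_mono) auto
      qed
      finally show ?thesis by (simp add: algebra_simps)
    qed
    have T1: "\<bar>(u + \<beta> x) * (P' - P - u^(d-1) * S)\<bar> * u^2 \<le> (1+B) * C * M^2 * u^(Suc d)"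
    proof -
      have ub: "\<bar>u + \<beta> x\<bar> \<le> (1+B) * u"
      proof -
        have Bu: "B \<le> B * u" using B0 u1 by (simp add: mult_le_cancel_left1)
        have "\<bar>u + \<beta> x\<bar> \<le> u + \<bar>\<beta> x\<bar>" using u1 abs_triangle_ineq[of u "\<beta> x"] by simp
        then show ?thesis using bx Bu by (simp add: algebra_simps)
      qed
      have "\<bar>(u + \<beta> x) * (P' - P - u^(d-1) * S)\<bar> * u^2 = \<bar>u + \<beta> x\<bar> * (\<bar>P' - P - u^(d-1) * S\<bar> * u^2)"
        by (simp add: abs_mult)
      also have "\<dots> \<le> ((1+B) * u) * (C * M^2 * u^d)"
        using B0 u1 by (intro mult_mono[OF ub IH]) auto
      also have "\<dots> = (1+B) * C * M^2 * u^(Suc d)" by (simp add: algebra_simps)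
      finally show ?thesis .
    qed
    have eq: "(\<Prod>i\<in>I. u + \<beta> i + \<alpha> i) - (\<Prod>i\<in>I. u + \<beta> i) - u^(Suc d - 1) * (\<Sum>i\<in>I. \<alpha> i)
        = (u + \<beta> x) * (P' - P - u^(d-1) * S) + \<beta> x * u^(d-1) * S + \<alpha> x * (P' - u^d)"
    proof -
      have "(\<Prod>i\<in>I. u + \<beta> i + \<alpha> i) = (u + \<beta> x + \<alpha> x) * P'" using IxF xF fF by (simp add: P'_def)
      moreover have "(\<Prod>i\<in>I. u + \<beta> i) = (u + \<beta> x) * P" using IxF xF fF by (simp add: P_def)
      moreover have "(\<Sum>i\<in>I. \<alpha> i) = \<alpha> x + S" using IxF xF fF by (simp add: S_def)
      ultimately show ?thesis using Sd by (simp add: algebra_simps)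
    qed
    have "\<bar>(u + \<beta> x) * (P' - P - u^(d-1) * S) + \<beta> x * u^(d-1) * S + \<alpha> x * (P' - u^d)\<bar> * u^2
        \<le> (\<bar>(u + \<beta> x) * (P' - P - u^(d-1) * S)\<bar> + \<bar>\<beta> x * u^(d-1) * S\<bar> + \<bar>\<alpha> x * (P' - u^d)\<bar>) * u^2"
      by (intro mult_right_mono) (auto intro: order.trans[OF abs_triangle_ineq] add_mono)
    also have "\<dots> \<le> (1+B) * C * M^2 * u^(Suc d) + B * d * M^2 * u^(Suc d) + d * (B+1) * H^d * M^2 * u^(Suc d)"
      using T1 T2 T3 by (simp add: distrib_right)
    also have "\<dots> = C' * M^2 * u^(Suc d)" by (simp add: C'_def algebra_simps)
    finally show "\<bar>(\<Prod>i\<in>I. u + \<beta> i + \<alpha> i) - (\<Prod>i\<in>I. u + \<beta> i) - u^(Suc d - 1) * (\<Sum>i\<in>I. \<alpha> i)\<bar> * u^2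
       \<le> C' * M^2 * u^(Suc d)" using eq by simp
  qed
qed


definition embs :: "'v set \<Rightarrow> 'v set set \<Rightarrow> 'f set \<Rightarrow> 'f set set \<Rightarrow> ('f \<Rightarrow> 'v) set" where
  "embs V E VF EF = {\<phi> \<in> VF \<rightarrow>\<^sub>E V. inj_on \<phi> VF \<and> (\<forall>e\<in>EF. \<phi> ` e \<in> E)}"

definition auts :: "'f set \<Rightarrow> 'f set set \<Rightarrow> ('f \<Rightarrow> 'f) set" where
  "auts VF EF = {\<sigma> \<in> VF \<rightarrow>\<^sub>E VF. bij_betw \<sigma> VF VF \<and> (\<lambda>e. \<sigma> ` e) ` EF = EF}"

lemma is_graph_edge_sub: "is_graph VF EF \<Longrightarrow> e \<in> EF \<Longrightarrow> e \<subseteq> VF"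
  unfolding is_graph_def by fastforce

lemma fiber_card:
  assumes G: "is_graph VF EF" and phi: "\<phi>0 \<in> embs V E VF EF"
  shows "card {\<psi> \<in> embs V E VF EF. \<psi> ` VF = \<phi>0 ` VF \<and> (\<lambda>e. \<psi> ` e) ` EF = (\<lambda>e. \<phi>0 ` e) ` EF}
         = card (auts VF EF)"
proof -
  let ?Fib = "{\<psi> \<in> embs V E VF EF. \<psi> ` VF = \<phi>0 ` VF \<and> (\<lambda>e. \<psi> ` e) ` EF = (\<lambda>e. \<phi>0 ` e) ` EF}"
  have fVF: "finite VF" using G unfolding is_graph_def by simp
  have p0: "\<phi>0 \<in> VF \<rightarrow>\<^sub>E V" "inj_on \<phi>0 VF" "\<forall>e\<in>EF. \<phi>0 ` e \<in> E" using phi unfolding embs_def by auto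
  have esub: "\<And>e. e \<in> EF \<Longrightarrow> e \<subseteq> VF" using G by (rule is_graph_edge_sub)
  define h where "h = (\<lambda>\<sigma>. restrict (\<phi>0 \<circ> \<sigma>) VF)"
  have "bij_betw h (auts VF EF) ?Fib"
  proof (rule bij_betwI')
    fix \<sigma>1 \<sigma>2 assume s1: "\<sigma>1 \<in> auts VF EF" and s2: "\<sigma>2 \<in> auts VF EF"
    show "(h \<sigma>1 = h \<sigma>2) = (\<sigma>1 = \<sigma>2)"
    proof
      assume eq: "h \<sigma>1 = h \<sigma>2"
      show "\<sigma>1 = \<sigma>2"
      proof (rule extensionalityI[of _ VF])
        show "\<sigma>1 \<in> extensional VF" "\<sigma>2 \<in> extensional VF" using s1 s2 unfolding auts_def by (auto simp: PiE_iff)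
        fix v assume v: "v \<in> VF"
        have "\<phi>0 (\<sigma>1 v) = \<phi>0 (\<sigma>2 v)" using fun_cong[OF eq, of v] v unfolding h_def by simp
        moreover have "\<sigma>1 v \<in> VF" "\<sigma>2 v \<in> VF" using s1 s2 v unfolding auts_def by auto
        ultimately show "\<sigma>1 v = \<sigma>2 v" using p0(2) by (meson inj_onD)
      qed
    qed simp
  next
    fix \<sigma> assume s: "\<sigma> \<in> auts VF EF"
    have sF: "\<sigma> \<in> VF \<rightarrow>\<^sub>E VF" "bij_betw \<sigma> VF VF" "(\<lambda>e. \<sigma> ` e) ` EF = EF" using s unfolding auts_def by auto
    have img: "\<And>e. e \<subseteq> VF \<Longrightarrow> h \<sigma> ` e = \<phi>0 ` (\<sigma> ` e)" unfolding h_def by auto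
    have "h \<sigma> \<in> VF \<rightarrow>\<^sub>E V" using sF(1) p0(1) unfolding h_def by auto
    moreover have "inj_on (h \<sigma>) VF"
    proof -
      have "inj_on (\<phi>0 \<circ> \<sigma>) VF" using sF(2) p0(2)
        by (metis bij_betw_def comp_inj_on)
      then show ?thesis unfolding h_def by (simp add: inj_on_def)
    qed
    moreover have hVF: "h \<sigma> ` VF = \<phi>0 ` VF" using img[of VF] sF(2) by (simp add: bij_betw_def)
    moreover have hE: "(\<lambda>e. h \<sigma> ` e) ` EF = (\<lambda>e. \<phi>0 ` e) ` EF"
    proof -
      have "(\<lambda>e. h \<sigma> ` e) ` EF = (\<lambda>e. \<phi>0 ` e) ` ((\<lambda>e. \<sigma> ` e) ` EF)"
        using img esub by (auto simp: image_image)
      then show ?thesis using sF(3) by simp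
    qed
    moreover have "\<forall>e\<in>EF. h \<sigma> ` e \<in> E"
    proof
      fix e assume "e \<in> EF"
      then have "h \<sigma> ` e \<in> (\<lambda>e. \<phi>0 ` e) ` EF" using hE by blast
      then show "h \<sigma> ` e \<in> E" using p0(3) by auto
    qed
    ultimately show "h \<sigma> \<in> ?Fib" unfolding embs_def by auto
  next
    fix \<psi> assume psi: "\<psi> \<in> ?Fib"
    have q: "\<psi> \<in> VF \<rightarrow>\<^sub>E V" "inj_on \<psi> VF" "\<psi> ` VF = \<phi>0 ` VF" "(\<lambda>e. \<psi> ` e) ` EF = (\<lambda>e. \<phi>0 ` e) ` EF"
      using psi unfolding embs_def by auto
    define \<sigma> where "\<sigma> = restrict (inv_into VF \<phi>0 \<circ> \<psi>) VF"
    have sv: "\<And>v. v \<in> VF \<Longrightarrow> \<sigma> v \<in> VF \<and> \<phi>0 (\<sigma> v) = \<psi> v"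
    proof -
      fix v assume v: "v \<in> VF"
      then have "\<psi> v \<in> \<phi>0 ` VF" using q(3) by blast
      then show "\<sigma> v \<in> VF \<and> \<phi>0 (\<sigma> v) = \<psi> v" using v unfolding \<sigma>_def
        by (simp add: inv_into_into f_inv_into_f)
    qed
    have sinj: "inj_on \<sigma> VF"
    proof (rule inj_onI)
      fix a b assume "a \<in> VF" "b \<in> VF" "\<sigma> a = \<sigma> b"
      then have "\<psi> a = \<psi> b" using sv by metis
      then show "a = b" using q(2) \<open>a \<in> VF\<close> \<open>b \<in> VF\<close> by (meson inj_onD)
    qed
    have sVF: "\<sigma> ` VF = VF" using endo_inj_surj[OF fVF _ sinj] sv by blast
    have sb: "bij_betw \<sigma> VF VF" using sinj sVF by (simp add: bij_betw_def)
    have sim: "\<And>e. e \<subseteq> VF \<Longrightarrow> \<phi>0 ` (\<sigma> ` e) = \<psi> ` e"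
      using sv by (force simp: image_image)
    have sE: "(\<lambda>e. \<sigma> ` e) ` EF = EF"
    proof -
      have A: "(\<lambda>e. \<sigma> ` e) ` EF \<subseteq> Pow VF" using esub sv by blast
      have Bp: "EF \<subseteq> Pow VF" using esub by blast
      have "(image \<phi>0) ` ((\<lambda>e. \<sigma> ` e) ` EF) = (image \<phi>0) ` EF"
      proof -
        have "(image \<phi>0) ` ((\<lambda>e. \<sigma> ` e) ` EF) = (\<lambda>e. \<psi> ` e) ` EF"
          using sim esub by (auto simp: image_image)
        then show ?thesis using q(4) by simp
      qed
      then show ?thesis using inj_on_image_Pow[OF p0(2)] A Bp
        by (metis inj_on_image_eq_iff)
    qed
    have sauts: "\<sigma> \<in> auts VF EF" unfolding auts_def using sv sb sE by (auto simp: \<sigma>_def)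
    have "h \<sigma> = \<psi>"
    proof (rule extensionalityI[of _ VF])
      show "h \<sigma> \<in> extensional VF" unfolding h_def by simp
      show "\<psi> \<in> extensional VF" using q(1) by (auto simp: PiE_iff)
      fix v assume "v \<in> VF" then show "h \<sigma> v = \<psi> v" using sv unfolding h_def by simp
    qed
    then show "\<exists>\<sigma>\<in>auts VF EF. \<psi> = h \<sigma>" using sauts by blast
  qed
  then show ?thesis by (simp add: bij_betw_same_card)
qed

lemma finite_embs: "finite VF \<Longrightarrow> finite V \<Longrightarrow> finite (embs V E VF EF)"
  unfolding embs_def by (rule finite_subset[of _ "VF \<rightarrow>\<^sub>E V"]) (auto intro: finite_PiE)

lemma emb_count:
  assumes G: "is_graph VF EF" and fV: "finite V"
  shows "card (embs V E VF EF) = sub_count V E VF EF * card (auts VF EF)"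
proof -
  have fVF: "finite VF" using G unfolding is_graph_def by simp
  have esub: "\<And>e. e \<in> EF \<Longrightarrow> e \<subseteq> VF" using G by (rule is_graph_edge_sub)
  define Cop where "Cop = {(W, E'). W \<subseteq> V \<and> E' \<subseteq> E \<and> (\<exists>\<phi>. bij_betw \<phi> VF W \<and> E' = (\<lambda>e. \<phi> ` e) ` EF)}"
  define Fib where "Fib = (\<lambda>q. {\<psi> \<in> embs V E VF EF. \<psi> ` VF = fst q \<and> (\<lambda>e. \<psi> ` e) ` EF = snd q})"
  have sc: "sub_count V E VF EF = card Cop" unfolding sub_count_def Cop_def by simp
  have U: "embs V E VF EF = \<Union>(Fib ` Cop)"
  proof
    show "embs V E VF EF \<subseteq> \<Union>(Fib ` Cop)"
    proof
      fix \<psi> assume p: "\<psi> \<in> embs V E VF EF"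
      then have p': "\<psi> \<in> VF \<rightarrow>\<^sub>E V" "inj_on \<psi> VF" "\<forall>e\<in>EF. \<psi> ` e \<in> E" unfolding embs_def by auto
      have "(\<psi> ` VF, (\<lambda>e. \<psi> ` e) ` EF) \<in> Cop"
        unfolding Cop_def using p' inj_on_imp_bij_betw[OF p'(2)] by auto
      moreover have "\<psi> \<in> Fib (\<psi> ` VF, (\<lambda>e. \<psi> ` e) ` EF)" using p unfolding Fib_def by simp
      ultimately show "\<psi> \<in> \<Union>(Fib ` Cop)" by blast
    qed
  qed (auto simp: Fib_def)
  have fCop: "finite Cop"
  proof (rule finite_subset[of _ "Pow V \<times> Pow (Pow V)"])
    show "Cop \<subseteq> Pow V \<times> Pow (Pow V)"
    proof
      fix q assume "q \<in> Cop"
      then obtain W E' \<phi> where q: "q = (W, E')" "W \<subseteq> V" "bij_betw \<phi> VF W" "E' = (\<lambda>e. \<phi> ` e) ` EF"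
        unfolding Cop_def by blast
      have "E' \<subseteq> Pow V"
      proof
        fix x assume "x \<in> E'"
        then obtain e where "e \<in> EF" "x = \<phi> ` e" using q by blast
        then have "x \<subseteq> \<phi> ` VF" using esub by blast
        then show "x \<in> Pow V" using q bij_betw_imp_surj_on[OF q(3)] by blast
      qed
      then show "q \<in> Pow V \<times> Pow (Pow V)" using q by blast
    qed
  qed (use fV in simp)
  have fFib: "\<forall>q\<in>Cop. finite (Fib q)"
    using finite_embs[OF fVF fV] unfolding Fib_def by auto
  have disj: "\<forall>q\<in>Cop. \<forall>q'\<in>Cop. q \<noteq> q' \<longrightarrow> Fib q \<inter> Fib q' = {}"
    unfolding Fib_def by (auto simp: prod_eq_iff)
  have cF: "\<forall>q\<in>Cop. card (Fib q) = card (auts VF EF)"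
  proof
    fix q assume "q \<in> Cop"
    then obtain W E' \<phi> where q: "q = (W, E')" "W \<subseteq> V" "E' \<subseteq> E" "bij_betw \<phi> VF W" "E' = (\<lambda>e. \<phi> ` e) ` EF"
      unfolding Cop_def by blast
    define \<phi>0 where "\<phi>0 = restrict \<phi> VF"
    have im: "\<And>e. e \<subseteq> VF \<Longrightarrow> \<phi>0 ` e = \<phi> ` e" unfolding \<phi>0_def by auto
    have W: "\<phi>0 ` VF = W" using im[of VF] bij_betw_imp_surj_on[OF q(4)] by simp
    have Ei: "(\<lambda>e. \<phi>0 ` e) ` EF = E'" using q(5) im esub by (auto simp: image_iff)
    have "\<phi>0 \<in> embs V E VF EF"
    proof -
      have "\<phi>0 \<in> VF \<rightarrow>\<^sub>E V" using W q(2) unfolding \<phi>0_def by auto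
      moreover have "inj_on \<phi>0 VF" using q(4) unfolding \<phi>0_def bij_betw_def by (simp add: inj_on_def)
      moreover have "\<forall>e\<in>EF. \<phi>0 ` e \<in> E" using Ei q(3) by blast
      ultimately show ?thesis unfolding embs_def by simp
    qed
    from fiber_card[OF G this]
    show "card (Fib q) = card (auts VF EF)" unfolding Fib_def using q(1) W Ei by simp
  qed
  have "card (embs V E VF EF) = (\<Sum>q\<in>Cop. card (Fib q))"
    unfolding U by (rule card_UN_disjoint[OF fCop fFib disj])
  also have "\<dots> = card Cop * card (auts VF EF)" using cF by simp
  finally show ?thesis using sc by simp
qed

lemma auts_pos:
  assumes G: "is_graph VF EF" shows "card (auts VF EF) \<ge> 1"
proof -
  have fVF: "finite VF" using G unfolding is_graph_def by simp
  have esub: "\<And>e. e \<in> EF \<Longrightarrow> e \<subseteq> VF" using G by (rule is_graph_edge_sub)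
  have im: "\<And>e. e \<subseteq> VF \<Longrightarrow> restrict id VF ` e = e" by auto
  have "restrict id VF \<in> auts VF EF"
  proof -
    have "(\<lambda>e. restrict id VF ` e) ` EF = EF" using im esub by (auto simp: image_iff)
    moreover have "bij_betw (restrict id VF) VF VF" using im[of VF] by (simp add: bij_betw_def inj_on_def)
    ultimately show ?thesis unfolding auts_def by auto
  qed
  moreover have "finite (auts VF EF)"
    unfolding auts_def by (rule finite_subset[of _ "VF \<rightarrow>\<^sub>E VF"]) (auto intro: finite_PiE fVF)
  ultimately show ?thesis by (metis One_nat_def Suc_leI card_gt_0_iff empty_iff)
qed


lemma not_colorable:
  assumes "chromatic_number VF EF = r + 1"
  shows "\<not> colorable VF EF r"
proof
  assume "colorable VF EF r"
  then have "chromatic_number VF EF \<le> r" unfolding chromatic_number_def by (rule Least_le)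
  then show False using assms by simp
qed

lemma part_edge_iff:
  assumes "a \<in> part_vertices r ns" "b \<in> part_vertices r ns" "a \<noteq> b"
  shows "{a, b} \<in> part_edges_plus r ns \<longleftrightarrow> fst a \<noteq> fst b \<or> (ns 0 \<ge> 2 \<and> {a, b} = {(0,0),(0,1)})"
proof
  assume "{a, b} \<in> part_edges_plus r ns"
  then consider (c) x y where "{a,b} = {x,y}" "fst x \<noteq> fst y" | (e) "ns 0 \<ge> 2" "{a,b} = {(0,0),(0,1)}"
    unfolding part_edges_plus_def by (auto split: if_splits)
  then show "fst a \<noteq> fst b \<or> (ns 0 \<ge> 2 \<and> {a, b} = {(0,0),(0,1)})"
  proof cases
    case c then show ?thesis using assms(3) by (auto simp: doubleton_eq_iff)
  next
    case e then show ?thesis by simp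
  qed
next
  assume "fst a \<noteq> fst b \<or> (ns 0 \<ge> 2 \<and> {a, b} = {(0,0),(0,1)})"
  then show "{a, b} \<in> part_edges_plus r ns"
  proof
    assume "fst a \<noteq> fst b"
    then have "{a, b} \<in> {{x, y} | x y. x \<in> part_vertices r ns \<and> y \<in> part_vertices r ns \<and> fst x \<noteq> fst y}"
      using assms by blast
    then show ?thesis unfolding part_edges_plus_def by blast
  next
    assume "ns 0 \<ge> 2 \<and> {a, b} = {(0,0),(0,1)}"
    then show ?thesis unfolding part_edges_plus_def by simp
  qed
qed

lemma count_typed_inj:
  fixes \<pi> :: "'f \<Rightarrow> nat" and T :: "nat \<Rightarrow> nat set"
  assumes fA: "finite A" and pr: "\<forall>v\<in>A. \<pi> v < r"
  shows "card {g \<in> A \<rightarrow>\<^sub>E Sigma {..<r} T. inj_on g A \<and> (\<forall>v\<in>A. fst (g v) = \<pi> v)}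
       = (\<Prod>i<r. card {h \<in> {v\<in>A. \<pi> v = i} \<rightarrow>\<^sub>E T i. inj_on h {v\<in>A. \<pi> v = i}})"
proof -
  define G where "G = {g \<in> A \<rightarrow>\<^sub>E Sigma {..<r} T. inj_on g A \<and> (\<forall>v\<in>A. fst (g v) = \<pi> v)}"
  define Inj where "Inj = (\<lambda>i. {h \<in> {v\<in>A. \<pi> v = i} \<rightarrow>\<^sub>E T i. inj_on h {v\<in>A. \<pi> v = i}})"
  define f where "f = (\<lambda>g::'f \<Rightarrow> nat \<times> nat. \<lambda>i\<in>{..<r}. restrict (snd \<circ> g) {v\<in>A. \<pi> v = i})"
  define k where "k = (\<lambda>H::nat \<Rightarrow> 'f \<Rightarrow> nat. restrict (\<lambda>v. (\<pi> v, H (\<pi> v) v)) A)"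
  have "bij_betw f G (\<Pi>\<^sub>E i\<in>{..<r}. Inj i)"
  proof (rule bij_betwI[where g = k])
    show "f \<in> G \<rightarrow> (\<Pi>\<^sub>E i\<in>{..<r}. Inj i)"
    proof
      fix g assume g: "g \<in> G"
      then have g1: "g \<in> A \<rightarrow>\<^sub>E Sigma {..<r} T" and g2: "inj_on g A" and g3: "\<forall>v\<in>A. fst (g v) = \<pi> v"
        unfolding G_def by auto
      have "restrict (snd \<circ> g) {v\<in>A. \<pi> v = i} \<in> Inj i" if "i < r" for i
      proof -
        have "restrict (snd \<circ> g) {v\<in>A. \<pi> v = i} \<in> {v\<in>A. \<pi> v = i} \<rightarrow>\<^sub>E T i"
          using g1 g3 by (force simp: PiE_iff)
        moreover have "inj_on (restrict (snd \<circ> g) {v\<in>A. \<pi> v = i}) {v\<in>A. \<pi> v = i}"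
        proof (rule inj_onI)
          fix a b assume a: "a \<in> {v\<in>A. \<pi> v = i}" and b: "b \<in> {v\<in>A. \<pi> v = i}"
            and e: "restrict (snd \<circ> g) {v\<in>A. \<pi> v = i} a = restrict (snd \<circ> g) {v\<in>A. \<pi> v = i} b"
          then have "snd (g a) = snd (g b)" by simp
          moreover have "fst (g a) = fst (g b)" using a b g3 by simp
          ultimately have "g a = g b" by (simp add: prod_eq_iff)
          then show "a = b" using g2 a b by (auto dest: inj_onD)
        qed
        ultimately show ?thesis unfolding Inj_def by simp
      qed
      then show "f g \<in> (\<Pi>\<^sub>E i\<in>{..<r}. Inj i)" unfolding f_def by auto
    qed
  next
    show "k \<in> (\<Pi>\<^sub>E i\<in>{..<r}. Inj i) \<rightarrow> G"
    proof
      fix H assume H: "H \<in> (\<Pi>\<^sub>E i\<in>{..<r}. Inj i)"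
      have Hv: "H (\<pi> v) v \<in> T (\<pi> v)" if "v \<in> A" for v
        using H that pr unfolding Inj_def by (force simp: PiE_iff)
      have "k H \<in> A \<rightarrow>\<^sub>E Sigma {..<r} T" unfolding k_def using Hv pr by auto
      moreover have "inj_on (k H) A"
      proof (rule inj_onI)
        fix a b assume a: "a \<in> A" and b: "b \<in> A" and e: "k H a = k H b"
        then have pe: "\<pi> a = \<pi> b" and he: "H (\<pi> a) a = H (\<pi> b) b" unfolding k_def by auto
        have "inj_on (H (\<pi> a)) {v\<in>A. \<pi> v = \<pi> a}" using H a pr unfolding Inj_def by (force simp: PiE_iff)
        then show "a = b" using a b pe he by (auto dest: inj_onD)
      qed
      moreover have "\<forall>v\<in>A. fst (k H v) = \<pi> v" unfolding k_def by simp
      ultimately show "k H \<in> G" unfolding G_def by simp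
    qed
  next
    fix g assume g: "g \<in> G"
    then have g1: "g \<in> A \<rightarrow>\<^sub>E Sigma {..<r} T" and g3: "\<forall>v\<in>A. fst (g v) = \<pi> v"
      unfolding G_def by auto
    show "k (f g) = g"
    proof (rule extensionalityI[of _ A])
      show "k (f g) \<in> extensional A" unfolding k_def by simp
      show "g \<in> extensional A" using g1 by (auto simp: PiE_iff)
      fix v assume v: "v \<in> A"
      then show "k (f g) v = g v" using g3 pr unfolding k_def f_def by (simp add: prod_eq_iff)
    qed
  next
    fix H assume H: "H \<in> (\<Pi>\<^sub>E i\<in>{..<r}. Inj i)"
    show "f (k H) = H"
    proof (rule extensionalityI[of _ "{..<r}"])
      show "f (k H) \<in> extensional {..<r}" unfolding f_def by simp
      show "H \<in> extensional {..<r}" using H by (auto simp: PiE_iff)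
      fix i assume i: "i \<in> {..<r}"
      have Hi: "H i \<in> extensional {v\<in>A. \<pi> v = i}" using H i unfolding Inj_def by (auto simp: PiE_iff)
      show "f (k H) i = H i"
      proof (rule extensionalityI[of _ "{v\<in>A. \<pi> v = i}"])
        show "f (k H) i \<in> extensional {v\<in>A. \<pi> v = i}" unfolding f_def using i by simp
        show "H i \<in> extensional {v\<in>A. \<pi> v = i}" by (rule Hi)
        fix v assume "v \<in> {v\<in>A. \<pi> v = i}"
        then show "f (k H) i v = H i v" unfolding f_def k_def using i by auto
      qed
    qed
  qed
  then have "card G = card (\<Pi>\<^sub>E i\<in>{..<r}. Inj i)" by (rule bij_betw_same_card)
  also have "\<dots> = (\<Prod>i<r. card (Inj i))" by (simp add: card_PiE)
  finally show ?thesis unfolding G_def Inj_def .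
qed


definition goodcol :: "nat \<Rightarrow> 'f set \<Rightarrow> 'f set set \<Rightarrow> ('f \<Rightarrow> nat) \<Rightarrow> bool" where
  "goodcol r VF EF \<pi> \<longleftrightarrow> \<pi> \<in> VF \<rightarrow>\<^sub>E {..<r} \<and> (\<exists>x y. {x,y} \<in> EF \<and> x \<noteq> y \<and> \<pi> x = 0 \<and> \<pi> y = 0 \<and>
      (\<forall>u v. {u,v} \<in> EF \<and> u \<noteq> v \<and> \<pi> u = \<pi> v \<longrightarrow> {u,v} = {x,y}))"

definition embsp :: "nat \<Rightarrow> (nat \<Rightarrow> nat) \<Rightarrow> 'f set \<Rightarrow> 'f set set \<Rightarrow> ('f \<Rightarrow> nat) \<Rightarrow> ('f \<Rightarrow> nat \<times> nat) set" where
  "embsp r ns VF EF \<pi> = {\<phi> \<in> embs (part_vertices r ns) (part_edges_plus r ns) VF EF. \<forall>v\<in>VF. fst (\<phi> v) = \<pi> v}"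

lemma is_graph_edge: "is_graph VF EF \<Longrightarrow> e \<in> EF \<Longrightarrow> \<exists>u v. u \<in> VF \<and> v \<in> VF \<and> u \<noteq> v \<and> e = {u,v}"
  unfolding is_graph_def by simp

lemma embs_part_iff:
  assumes G: "is_graph VF EF" and p1: "\<phi> \<in> VF \<rightarrow>\<^sub>E part_vertices r ns" and p2: "inj_on \<phi> VF"
  shows "\<phi> \<in> embs (part_vertices r ns) (part_edges_plus r ns) VF EF \<longleftrightarrow>
     (\<forall>u v. {u,v} \<in> EF \<and> u \<noteq> v \<longrightarrow> fst (\<phi> u) \<noteq> fst (\<phi> v) \<or> (ns 0 \<ge> 2 \<and> {\<phi> u, \<phi> v} = {(0,0),(0,1)}))"
proof -
  have key: "\<phi> ` {u,v} \<in> part_edges_plus r ns \<longleftrightarrow> fst (\<phi> u) \<noteq> fst (\<phi> v) \<or> (ns 0 \<ge> 2 \<and> {\<phi> u, \<phi> v} = {(0,0),(0,1)})"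
    if "{u,v} \<in> EF" "u \<noteq> v" for u v
  proof -
    have uv: "u \<in> VF" "v \<in> VF" using is_graph_edge_sub[OF G that(1)] by auto
    then have "\<phi> u \<noteq> \<phi> v" using p2 that(2) by (auto dest: inj_onD)
    moreover have "\<phi> u \<in> part_vertices r ns" "\<phi> v \<in> part_vertices r ns" using p1 uv by auto
    ultimately show ?thesis using part_edge_iff by simp
  qed
  show ?thesis
  proof
    assume "\<phi> \<in> embs (part_vertices r ns) (part_edges_plus r ns) VF EF"
    then show "\<forall>u v. {u,v} \<in> EF \<and> u \<noteq> v \<longrightarrow> fst (\<phi> u) \<noteq> fst (\<phi> v) \<or> (ns 0 \<ge> 2 \<and> {\<phi> u, \<phi> v} = {(0,0),(0,1)})"
      unfolding embs_def using key by blast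
  next
    assume A: "\<forall>u v. {u,v} \<in> EF \<and> u \<noteq> v \<longrightarrow> fst (\<phi> u) \<noteq> fst (\<phi> v) \<or> (ns 0 \<ge> 2 \<and> {\<phi> u, \<phi> v} = {(0,0),(0,1)})"
    have "\<forall>e\<in>EF. \<phi> ` e \<in> part_edges_plus r ns"
    proof
      fix e assume e: "e \<in> EF"
      then obtain u v where "u \<noteq> v" "e = {u,v}" using is_graph_edge[OF G] by blast
      then show "\<phi> ` e \<in> part_edges_plus r ns" using key A e by blast
    qed
    then show "\<phi> \<in> embs (part_vertices r ns) (part_edges_plus r ns) VF EF"
      unfolding embs_def using p1 p2 by simp
  qed
qed

lemma embs_union:
  "embs (part_vertices r ns) (part_edges_plus r ns) VF EF = (\<Union>\<pi>\<in>VF \<rightarrow>\<^sub>E {..<r}. embsp r ns VF EF \<pi>)"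
proof
  show "embs (part_vertices r ns) (part_edges_plus r ns) VF EF \<subseteq> (\<Union>\<pi>\<in>VF \<rightarrow>\<^sub>E {..<r}. embsp r ns VF EF \<pi>)"
  proof
    fix \<phi> assume p: "\<phi> \<in> embs (part_vertices r ns) (part_edges_plus r ns) VF EF"
    then have "\<phi> \<in> VF \<rightarrow>\<^sub>E part_vertices r ns" unfolding embs_def by simp
    then have "\<forall>v\<in>VF. fst (\<phi> v) < r" unfolding part_vertices_def by (auto simp: PiE_iff case_prod_beta)
    then have "restrict (fst \<circ> \<phi>) VF \<in> VF \<rightarrow>\<^sub>E {..<r}" by auto
    moreover have "\<phi> \<in> embsp r ns VF EF (restrict (fst \<circ> \<phi>) VF)" using p unfolding embsp_def by simp
    ultimately show "\<phi> \<in> (\<Union>\<pi>\<in>VF \<rightarrow>\<^sub>E {..<r}. embsp r ns VF EF \<pi>)" by blast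
  qed
qed (auto simp: embsp_def)

lemma embsp_empty:
  assumes G: "is_graph VF EF" and chi: "chromatic_number VF EF = r + 1"
    and pi: "\<pi> \<in> VF \<rightarrow>\<^sub>E {..<r}" and ng: "\<not> goodcol r VF EF \<pi>"
  shows "embsp r ns VF EF \<pi> = {}"
proof (rule ccontr)
  assume "embsp r ns VF EF \<pi> \<noteq> {}"
  then obtain \<phi> where p: "\<phi> \<in> embs (part_vertices r ns) (part_edges_plus r ns) VF EF" and fp: "\<forall>v\<in>VF. fst (\<phi> v) = \<pi> v"
    unfolding embsp_def by auto
  have p1: "\<phi> \<in> VF \<rightarrow>\<^sub>E part_vertices r ns" and p2: "inj_on \<phi> VF" using p unfolding embs_def by auto
  have E: "\<forall>u v. {u,v} \<in> EF \<and> u \<noteq> v \<longrightarrow> fst (\<phi> u) \<noteq> fst (\<phi> v) \<or> (ns 0 \<ge> 2 \<and> {\<phi> u, \<phi> v} = {(0,0),(0,1)})"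
    using embs_part_iff[OF G p1 p2] p by simp
  have ein: "\<And>u v. {u,v} \<in> EF \<Longrightarrow> u \<in> VF \<and> v \<in> VF" using is_graph_edge_sub[OF G] by blast
  show False
  proof (cases "\<exists>x y. {x,y} \<in> EF \<and> x \<noteq> y \<and> \<pi> x = \<pi> y")
    case False
    have c1: "\<forall>v\<in>VF. \<pi> v < r" using pi by auto
    have c2: "\<forall>u v. {u,v} \<in> EF \<and> u \<noteq> v \<longrightarrow> \<pi> u \<noteq> \<pi> v" using False by blast
    have "colorable VF EF r" unfolding colorable_def using c1 c2 by blast
    then show False using not_colorable[OF chi] by simp
  next
    case True
    then obtain x y where xy: "{x,y} \<in> EF" "x \<noteq> y" "\<pi> x = \<pi> y" by blast
    have "fst (\<phi> x) = fst (\<phi> y)" using xy fp ein[OF xy(1)] by simp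
    then have e0: "{\<phi> x, \<phi> y} = {(0,0),(0,1)}" using E[rule_format, of x y] xy by blast
    then have "fst (\<phi> x) = 0" by (auto simp: doubleton_eq_iff)
    then have px: "\<pi> x = 0" using fp ein[OF xy(1)] by simp
    have "\<forall>u v. {u,v} \<in> EF \<and> u \<noteq> v \<and> \<pi> u = \<pi> v \<longrightarrow> {u,v} = {x,y}"
    proof (intro allI impI)
      fix u v assume uv: "{u,v} \<in> EF \<and> u \<noteq> v \<and> \<pi> u = \<pi> v"
      then have "fst (\<phi> u) = fst (\<phi> v)" using fp ein[of u v] by simp
      then have "{\<phi> u, \<phi> v} = {(0,0),(0,1)}" using E[rule_format, of u v] uv by blast
      then have "\<phi> ` {u,v} = \<phi> ` {x,y}" using e0 by simp
      moreover have "{u,v} \<subseteq> VF" "{x,y} \<subseteq> VF" using ein uv xy by auto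
      ultimately show "{u,v} = {x,y}" using inj_onD[OF inj_on_image_Pow[OF p2]] by blast
    qed
    then have "goodcol r VF EF \<pi>" unfolding goodcol_def using pi xy px by auto
    then show False using ng by simp
  qed
qed


definition ffc :: "nat \<Rightarrow> nat \<Rightarrow> nat" where "ffc m k = (\<Prod>j\<in>{0..<k}. m - j)"
definition sh :: "nat \<Rightarrow> nat" where "sh i = (if i = 0 then 2 else 0)"
definition kk :: "'f set \<Rightarrow> ('f \<Rightarrow> nat) \<Rightarrow> nat \<Rightarrow> nat" where
  "kk VF \<pi> i = card {v\<in>VF. \<pi> v = i} - sh i"

lemma embsp_card:
  assumes G: "is_graph VF EF" and gc: "goodcol r VF EF \<pi>" and n2: "ns 0 \<ge> 2" and r0: "r > 0"
  shows "card (embsp r ns VF EF \<pi>) = 2 * (\<Prod>i<r. ffc (ns i - sh i) (kk VF \<pi> i))"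
proof -
  have fVF: "finite VF" using G unfolding is_graph_def by simp
  have pi: "\<pi> \<in> VF \<rightarrow>\<^sub>E {..<r}" using gc unfolding goodcol_def by simp
  obtain x y where xy: "{x,y} \<in> EF" "x \<noteq> y" "\<pi> x = 0" "\<pi> y = 0"
    and uniq: "\<forall>u v. {u,v} \<in> EF \<and> u \<noteq> v \<and> \<pi> u = \<pi> v \<longrightarrow> {u,v} = {x,y}"
    using gc unfolding goodcol_def by blast
  have xyV: "x \<in> VF" "y \<in> VF" using is_graph_edge_sub[OF G xy(1)] by auto
  define V where "V = part_vertices r ns"
  define e0 where "e0 = {(0::nat,0::nat),(0,1)}"
  define T where "T = (\<lambda>i. {j. j < ns i \<and> (i = 0 \<longrightarrow> 2 \<le> j)})"
  define A where "A = VF - {x,y}"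
  define G' where "G' = {g \<in> A \<rightarrow>\<^sub>E Sigma {..<r} T. inj_on g A \<and> (\<forall>v\<in>A. fst (g v) = \<pi> v)}"
  have e0V: "e0 \<subseteq> V" unfolding e0_def V_def part_vertices_def using n2 r0 by auto
  have VT: "Sigma {..<r} T = V - e0" unfolding V_def e0_def T_def part_vertices_def by auto
  have char: "\<phi> \<in> embsp r ns VF EF \<pi> \<longleftrightarrow> \<phi> \<in> VF \<rightarrow>\<^sub>E V \<and> inj_on \<phi> VF \<and> (\<forall>v\<in>VF. fst (\<phi> v) = \<pi> v) \<and> {\<phi> x, \<phi> y} = e0" for \<phi>
  proof
    assume p: "\<phi> \<in> embsp r ns VF EF \<pi>"
    then have p0: "\<phi> \<in> embs (part_vertices r ns) (part_edges_plus r ns) VF EF" and fp: "\<forall>v\<in>VF. fst (\<phi> v) = \<pi> v"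
      unfolding embsp_def by auto
    have p1: "\<phi> \<in> VF \<rightarrow>\<^sub>E part_vertices r ns" and p2: "inj_on \<phi> VF" using p0 unfolding embs_def by auto
    have E: "\<forall>u v. {u,v} \<in> EF \<and> u \<noteq> v \<longrightarrow> fst (\<phi> u) \<noteq> fst (\<phi> v) \<or> (ns 0 \<ge> 2 \<and> {\<phi> u, \<phi> v} = {(0,0),(0,1)})"
      using embs_part_iff[OF G p1 p2] p0 by simp
    have "fst (\<phi> x) = fst (\<phi> y)" using fp xyV xy by simp
    then have "{\<phi> x, \<phi> y} = e0" unfolding e0_def using E[rule_format, of x y] xy by blast
    then show "\<phi> \<in> VF \<rightarrow>\<^sub>E V \<and> inj_on \<phi> VF \<and> (\<forall>v\<in>VF. fst (\<phi> v) = \<pi> v) \<and> {\<phi> x, \<phi> y} = e0"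
      using p1 p2 fp unfolding V_def by simp
  next
    assume A: "\<phi> \<in> VF \<rightarrow>\<^sub>E V \<and> inj_on \<phi> VF \<and> (\<forall>v\<in>VF. fst (\<phi> v) = \<pi> v) \<and> {\<phi> x, \<phi> y} = e0"
    then have p1: "\<phi> \<in> VF \<rightarrow>\<^sub>E part_vertices r ns" and p2: "inj_on \<phi> VF" and fp: "\<forall>v\<in>VF. fst (\<phi> v) = \<pi> v"
      and pe: "{\<phi> x, \<phi> y} = e0" unfolding V_def by auto
    have "\<forall>u v. {u,v} \<in> EF \<and> u \<noteq> v \<longrightarrow> fst (\<phi> u) \<noteq> fst (\<phi> v) \<or> (ns 0 \<ge> 2 \<and> {\<phi> u, \<phi> v} = {(0,0),(0,1)})"
    proof (intro allI impI)
      fix u v assume uv: "{u,v} \<in> EF \<and> u \<noteq> v"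
      have uvV: "u \<in> VF" "v \<in> VF" using is_graph_edge_sub[OF G] uv by auto
      show "fst (\<phi> u) \<noteq> fst (\<phi> v) \<or> (ns 0 \<ge> 2 \<and> {\<phi> u, \<phi> v} = {(0,0),(0,1)})"
      proof (cases "\<pi> u = \<pi> v")
        case True
        then have "{u,v} = {x,y}" using uniq uv by blast
        then have "{\<phi> u, \<phi> v} = {\<phi> x, \<phi> y}" by (auto simp: doubleton_eq_iff)
        then show ?thesis using pe n2 unfolding e0_def by simp
      next
        case False then show ?thesis using fp uvV by simp
      qed
    qed
    then have "\<phi> \<in> embs (part_vertices r ns) (part_edges_plus r ns) VF EF" using embs_part_iff[OF G p1 p2] by simp
    then show "\<phi> \<in> embsp r ns VF EF \<pi>" unfolding embsp_def using fp by simp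
  qed
  define f where "f = (\<lambda>\<phi>::'a \<Rightarrow> nat \<times> nat. (snd (\<phi> x), restrict \<phi> A))"
  define k where "k = (\<lambda>(b::nat, g::'a \<Rightarrow> nat \<times> nat). (\<lambda>v. if v = x then (0, b) else if v = y then (0, 1 - b) else g v))"
  have "bij_betw f (embsp r ns VF EF \<pi>) ({0,1} \<times> G')"
  proof (rule bij_betwI[where g = k])
    show "f \<in> embsp r ns VF EF \<pi> \<rightarrow> {0,1} \<times> G'"
    proof
      fix \<phi> assume "\<phi> \<in> embsp r ns VF EF \<pi>"
      then have p1: "\<phi> \<in> VF \<rightarrow>\<^sub>E V" and p2: "inj_on \<phi> VF" and fp: "\<forall>v\<in>VF. fst (\<phi> v) = \<pi> v"
        and pe: "{\<phi> x, \<phi> y} = e0" using char by auto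
      have "\<phi> x \<in> e0" using pe by blast
      then have "snd (\<phi> x) \<in> {0,1}" unfolding e0_def by auto
      moreover have "restrict \<phi> A \<in> G'"
      proof -
        have "\<phi> v \<in> V - e0" if v: "v \<in> A" for v
        proof -
          have "v \<in> VF" "v \<noteq> x" "v \<noteq> y" using v unfolding A_def by auto
          then have "\<phi> v \<noteq> \<phi> x" "\<phi> v \<noteq> \<phi> y" using p2 xyV by (auto dest: inj_onD)
          then have "\<phi> v \<notin> e0" using pe by blast
          then show ?thesis using p1 \<open>v \<in> VF\<close> by auto
        qed
        then have "restrict \<phi> A \<in> A \<rightarrow>\<^sub>E Sigma {..<r} T" using VT by auto
        moreover have "inj_on (restrict \<phi> A) A" using p2 unfolding A_def by (auto simp: inj_on_def)
        moreover have "\<forall>v\<in>A. fst (restrict \<phi> A v) = \<pi> v" using fp unfolding A_def by auto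
        ultimately show ?thesis unfolding G'_def by simp
      qed
      ultimately show "f \<phi> \<in> {0,1} \<times> G'" unfolding f_def by simp
    qed
  next
    show "k \<in> {0,1} \<times> G' \<rightarrow> embsp r ns VF EF \<pi>"
    proof
      fix q :: "nat \<times> ('a \<Rightarrow> nat \<times> nat)" assume q: "q \<in> {0,1} \<times> G'"
      then obtain b g where qbg: "q = (b, g)" and b: "b \<in> {0,1}" and g: "g \<in> G'" by blast
      have g1: "g \<in> A \<rightarrow>\<^sub>E V - e0" and g2: "inj_on g A" and g3: "\<forall>v\<in>A. fst (g v) = \<pi> v"
        using g VT unfolding G'_def by auto
      define \<psi> where "\<psi> = (\<lambda>v. if v = x then (0, b) else if v = y then (0, 1 - b) else g v)"
      have kq: "k q = \<psi>" unfolding k_def \<psi>_def qbg by simp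
      have bx: "(0, b) \<in> e0" "(0, 1 - b) \<in> e0" "(0,b) \<noteq> (0, 1-b)" using b unfolding e0_def by auto
      have "\<psi> \<in> VF \<rightarrow>\<^sub>E V"
      proof -
        have "\<psi> v \<in> V" if "v \<in> VF" for v using that g1 bx e0V unfolding \<psi>_def A_def by auto
        moreover have "\<psi> v = undefined" if "v \<notin> VF" for v
          using that g1 xyV unfolding \<psi>_def A_def by (auto simp: PiE_iff extensional_def)
        ultimately show ?thesis by (auto simp: PiE_iff extensional_def)
      qed
      moreover have "inj_on \<psi> VF"
      proof (rule inj_onI)
        fix a c assume a: "a \<in> VF" and c: "c \<in> VF" and e: "\<psi> a = \<psi> c"
        have gA: "\<And>v. v \<in> A \<Longrightarrow> g v \<notin> e0" using g1 by auto
        show "a = c"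
        proof (cases "a \<in> {x,y}")
          case True
          then show ?thesis
          proof (cases "c \<in> {x,y}")
            case True then show ?thesis using \<open>a \<in> {x,y}\<close> e bx xy(2) unfolding \<psi>_def by auto
          next
            case False
            then have "c \<in> A" using c unfolding A_def by simp
            then show ?thesis using \<open>a \<in> {x,y}\<close> e bx gA False unfolding \<psi>_def by (auto split: if_splits)
          qed
        next
          case False
          then have aA: "a \<in> A" using a unfolding A_def by simp
          show ?thesis
          proof (cases "c \<in> {x,y}")
            case True then show ?thesis using aA e bx gA[OF aA] False unfolding \<psi>_def by (auto split: if_splits)
          next
            case False
            then have "c \<in> A" using c unfolding A_def by simp
            then show ?thesis using aA e \<open>a \<notin> {x,y}\<close> False g2 unfolding \<psi>_def by (auto dest: inj_onD)
          qed
        qed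
      qed
      moreover have "\<forall>v\<in>VF. fst (\<psi> v) = \<pi> v" using g3 xy unfolding \<psi>_def A_def by auto
      moreover have "{\<psi> x, \<psi> y} = e0" using xy(2) b unfolding \<psi>_def e0_def by auto
      ultimately show "k q \<in> embsp r ns VF EF \<pi>" using char kq by simp
    qed
  next
    fix \<phi> assume "\<phi> \<in> embsp r ns VF EF \<pi>"
    then have p1: "\<phi> \<in> VF \<rightarrow>\<^sub>E V" and p2: "inj_on \<phi> VF" and fp: "\<forall>v\<in>VF. fst (\<phi> v) = \<pi> v"
      and pe: "{\<phi> x, \<phi> y} = e0" using char by auto
    have ne: "\<phi> x \<noteq> \<phi> y" using p2 xy(2) xyV by (auto dest: inj_onD)
    have fx: "\<phi> x = (0, snd (\<phi> x))" using fp xyV xy by (simp add: prod_eq_iff)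
    have fy: "\<phi> y = (0, 1 - snd (\<phi> x))" using pe ne unfolding e0_def by (auto simp: doubleton_eq_iff)
    show "k (f \<phi>) = \<phi>"
    proof
      fix v
      show "k (f \<phi>) v = \<phi> v"
      proof (cases "v \<in> VF")
        case True then show ?thesis using fx fy unfolding k_def f_def A_def by auto
      next
        case False then show ?thesis using p1 xyV unfolding k_def f_def A_def by (auto simp: PiE_iff extensional_def)
      qed
    qed
  next
    fix q :: "nat \<times> ('a \<Rightarrow> nat \<times> nat)" assume q: "q \<in> {0,1} \<times> G'"
    then obtain b g where qbg: "q = (b, g)" and g: "g \<in> G'" by blast
    have "g \<in> extensional A" using g unfolding G'_def by (auto simp: PiE_iff)
    then have "restrict (\<lambda>v. if v = x then (0, b) else if v = y then (0, 1 - b) else g v) A = g"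
      unfolding A_def by (auto simp: extensional_def fun_eq_iff)
    then show "f (k q) = q" unfolding f_def k_def qbg by simp
  qed
  then have c1: "card (embsp r ns VF EF \<pi>) = 2 * card G'"
    by (simp add: bij_betw_same_card card_cartesian_product)
  have fA: "finite A" using fVF unfolding A_def by simp
  have prA: "\<forall>v\<in>A. \<pi> v < r" using pi unfolding A_def by auto
  have c2: "card G' = (\<Prod>i<r. card {h \<in> {v\<in>A. \<pi> v = i} \<rightarrow>\<^sub>E T i. inj_on h {v\<in>A. \<pi> v = i}})"
    unfolding G'_def by (rule count_typed_inj[OF fA prA])
  have c3: "card {h \<in> {v\<in>A. \<pi> v = i} \<rightarrow>\<^sub>E T i. inj_on h {v\<in>A. \<pi> v = i}} = ffc (ns i - sh i) (kk VF \<pi> i)" for i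
  proof -
    have fT: "finite (T i)" unfolding T_def by simp
    have cT: "card (T i) = ns i - sh i"
    proof (cases "i = 0")
      case True
      then have "T i = {2..<ns i}" unfolding T_def by auto
      then show ?thesis using True by (simp add: sh_def)
    next
      case False
      then have "T i = {..<ns i}" unfolding T_def by auto
      then show ?thesis using False by (simp add: sh_def)
    qed
    have cA: "card {v\<in>A. \<pi> v = i} = kk VF \<pi> i"
    proof (cases "i = 0")
      case True
      then have "{v\<in>A. \<pi> v = i} = {v\<in>VF. \<pi> v = i} - {x,y}" unfolding A_def by auto
      moreover have "{x,y} \<subseteq> {v\<in>VF. \<pi> v = i}" using True xy xyV by auto
      ultimately show ?thesis using True fVF xy(2) by (simp add: kk_def sh_def card_Diff_subset)
    next
      case False
      then have "{v\<in>A. \<pi> v = i} = {v\<in>VF. \<pi> v = i}" unfolding A_def using xy by auto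
      then show ?thesis using False by (simp add: kk_def sh_def)
    qed
    have "card {h \<in> {v\<in>A. \<pi> v = i} \<rightarrow>\<^sub>E T i. inj_on h {v\<in>A. \<pi> v = i}}
      = card (T i) ^ (card {v\<in>A. \<pi> v = i} - card {v\<in>A. \<pi> v = i}) * prod ((-) (card (T i))) {0..<card {v\<in>A. \<pi> v = i}}"
      by (rule card_inj_on_subset_funcset) (use fA fT in auto)
    then show ?thesis using cT cA by (simp add: ffc_def)
  qed
  show ?thesis using c1 c2 c3 by simp
qed


lemma embs_zero:
  assumes G: "is_graph VF EF" and chi: "chromatic_number VF EF = r + 1" and n1: "ns 0 < 2"
  shows "embs (part_vertices r ns) (part_edges_plus r ns) VF EF = {}"
proof (rule ccontr)
  assume "embs (part_vertices r ns) (part_edges_plus r ns) VF EF \<noteq> {}"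
  then obtain \<phi> where p: "\<phi> \<in> embs (part_vertices r ns) (part_edges_plus r ns) VF EF" by blast
  have p1: "\<phi> \<in> VF \<rightarrow>\<^sub>E part_vertices r ns" and p2: "inj_on \<phi> VF" using p unfolding embs_def by auto
  have E: "\<forall>u v. {u,v} \<in> EF \<and> u \<noteq> v \<longrightarrow> fst (\<phi> u) \<noteq> fst (\<phi> v) \<or> (ns 0 \<ge> 2 \<and> {\<phi> u, \<phi> v} = {(0,0),(0,1)})"
    using embs_part_iff[OF G p1 p2] p by simp
  have c1: "\<forall>v\<in>VF. fst (\<phi> v) < r" using p1 unfolding part_vertices_def by (auto simp: PiE_iff case_prod_beta)
  have c2: "\<forall>u v. {u,v} \<in> EF \<and> u \<noteq> v \<longrightarrow> fst (\<phi> u) \<noteq> fst (\<phi> v)" using E n1 by auto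
  have "colorable VF EF r" unfolding colorable_def
    by (rule exI[of _ "\<lambda>v. fst (\<phi> v)"]) (use c1 c2 in blast)
  then show False using not_colorable[OF chi] by simp
qed

lemma embs_formula:
  assumes G: "is_graph VF EF" and chi: "chromatic_number VF EF = r + 1" and n2: "ns 0 \<ge> 2" and r0: "r > 0"
  shows "card (embs (part_vertices r ns) (part_edges_plus r ns) VF EF)
     = (\<Sum>\<pi>\<in>{\<pi>. goodcol r VF EF \<pi>}. 2 * (\<Prod>i<r. ffc (ns i - sh i) (kk VF \<pi> i)))"
proof -
  have fVF: "finite VF" using G unfolding is_graph_def by simp
  have "part_vertices r ns = Sigma {..<r} (\<lambda>i. {..<ns i})" unfolding part_vertices_def by auto
  then have fV: "finite (part_vertices r ns)" by simp
  let ?S = "VF \<rightarrow>\<^sub>E {..<r}"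
  have fS: "finite ?S" using fVF by (intro finite_PiE) auto
  have fE: "\<forall>\<pi>\<in>?S. finite (embsp r ns VF EF \<pi>)"
    using finite_embs[OF fVF fV] unfolding embsp_def by auto
  have disj: "\<forall>\<pi>\<in>?S. \<forall>\<pi>'\<in>?S. \<pi> \<noteq> \<pi>' \<longrightarrow> embsp r ns VF EF \<pi> \<inter> embsp r ns VF EF \<pi>' = {}"
  proof (intro ballI impI)
    fix \<pi> \<pi>' assume a: "\<pi> \<in> ?S" "\<pi>' \<in> ?S" "\<pi> \<noteq> \<pi>'"
    then obtain v where "v \<in> VF" "\<pi> v \<noteq> \<pi>' v" by (metis PiE_ext)
    then show "embsp r ns VF EF \<pi> \<inter> embsp r ns VF EF \<pi>' = {}" unfolding embsp_def by auto
  qed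
  have "card (embs (part_vertices r ns) (part_edges_plus r ns) VF EF) = (\<Sum>\<pi>\<in>?S. card (embsp r ns VF EF \<pi>))"
    unfolding embs_union by (rule card_UN_disjoint[OF fS fE disj])
  also have "\<dots> = (\<Sum>\<pi>\<in>{\<pi>. goodcol r VF EF \<pi>}. card (embsp r ns VF EF \<pi>))"
  proof (rule sum.mono_neutral_right[OF fS])
    show "{\<pi>. goodcol r VF EF \<pi>} \<subseteq> ?S" unfolding goodcol_def by auto
    show "\<forall>\<pi>\<in>?S - {\<pi>. goodcol r VF EF \<pi>}. card (embsp r ns VF EF \<pi>) = 0"
      using embsp_empty[OF G chi] by auto
  qed
  also have "\<dots> = (\<Sum>\<pi>\<in>{\<pi>. goodcol r VF EF \<pi>}. 2 * (\<Prod>i<r. ffc (ns i - sh i) (kk VF \<pi> i)))"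
    using G n2 r0 by (intro sum.cong refl) (simp add: embsp_card)
  finally show ?thesis .
qed

lemma finite_goodcol: "finite VF \<Longrightarrow> finite {\<pi>. goodcol r VF EF \<pi>}"
  by (rule finite_subset[of _ "VF \<rightarrow>\<^sub>E {..<r}"]) (auto simp: goodcol_def intro: finite_PiE)

lemma sum_kk:
  assumes fVF: "finite VF" and gc: "goodcol r VF EF \<pi>" and G: "is_graph VF EF"
  shows "(\<Sum>i<r. kk VF \<pi> i) = card VF - 2" and "r > 0"
proof -
  have pi: "\<pi> \<in> VF \<rightarrow>\<^sub>E {..<r}" using gc unfolding goodcol_def by simp
  obtain x y where xy: "{x,y} \<in> EF" "x \<noteq> y" "\<pi> x = 0" "\<pi> y = 0"
    using gc unfolding goodcol_def by blast
  have xyV: "x \<in> VF" "y \<in> VF" using is_graph_edge_sub[OF G xy(1)] by auto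
  show r0: "r > 0" using pi xyV by auto
  have U: "VF = (\<Union>i\<in>{..<r}. {v\<in>VF. \<pi> v = i})" using pi by auto
  have cs: "card VF = (\<Sum>i<r. card {v\<in>VF. \<pi> v = i})"
    by (subst U, rule card_UN_disjoint) (use fVF in auto)
  have c0: "card {v\<in>VF. \<pi> v = 0} \<ge> 2"
  proof -
    have "{x,y} \<subseteq> {v\<in>VF. \<pi> v = 0}" using xy xyV by auto
    then have "card {x,y} \<le> card {v\<in>VF. \<pi> v = 0}" using fVF by (intro card_mono) auto
    then show ?thesis using xy(2) by simp
  qed
  have ge: "\<forall>i<r. card {v\<in>VF. \<pi> v = i} \<ge> sh i" using c0 by (simp add: sh_def)
  have shs: "(\<Sum>i<r. sh i) = 2"
  proof -
    have "(\<Sum>i<r. sh i) = (\<Sum>i\<in>{0}. sh i)"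
      by (rule sum.mono_neutral_right) (use r0 in \<open>auto simp: sh_def\<close>)
    then show ?thesis by (simp add: sh_def)
  qed
  have "(\<Sum>i<r. kk VF \<pi> i) + (\<Sum>i<r. sh i) = (\<Sum>i<r. card {v\<in>VF. \<pi> v = i})"
    unfolding kk_def sum.distrib[symmetric] using ge by (intro sum.cong) auto
  then show "(\<Sum>i<r. kk VF \<pi> i) = card VF - 2" using cs shs by simp
qed

lemma real_ffc: "real (ffc m k) = (\<Prod>j<k. real m - real j)"
proof (cases "k \<le> m")
  case True
  then show ?thesis unfolding ffc_def of_nat_prod atLeast0LessThan by (intro prod.cong) (auto simp: of_nat_diff)
next
  case False
  then have "m \<in> {..<k}" by simp
  then have "(\<Prod>j<k. real m - real j) = 0" by (intro prod_zero) auto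
  moreover have "ffc m k = 0" unfolding ffc_def using \<open>m \<in> {..<k}\<close> by (intro prod_zero) (auto simp: atLeast0LessThan)
  ultimately show ?thesis by simp
qed

lemma ffc_le: "ffc m k \<le> m ^ k"
proof -
  have "ffc m k \<le> (\<Prod>j\<in>{0..<k}. m)" unfolding ffc_def by (intro prod_mono) auto
  then show ?thesis by simp
qed

definition tau :: "nat \<Rightarrow> nat \<Rightarrow> nat" where
  "tau i c = (if c = 1 then i else if c = i then 1 else c)"

lemma Lam_sym:
  assumes i1: "1 \<le> i" and ir: "i < r" and G: "is_graph VF EF"
  shows "(\<Sum>\<pi>\<in>{\<pi>. goodcol r VF EF \<pi>}. kk VF \<pi> i) = (\<Sum>\<pi>\<in>{\<pi>. goodcol r VF EF \<pi>}. kk VF \<pi> 1)"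
proof -
  define h where "h = (\<lambda>\<pi>::'a \<Rightarrow> nat. restrict (tau i \<circ> \<pi>) VF)"
  have tt: "tau i (tau i c) = c" for c unfolding tau_def by auto
  have t0: "tau i c = 0 \<longleftrightarrow> c = 0" for c unfolding tau_def using i1 by auto
  have tinj: "tau i a = tau i b \<longleftrightarrow> a = b" for a b by (metis tt)
  have tr: "c < r \<Longrightarrow> tau i c < r" for c unfolding tau_def using i1 ir by auto
  have hh: "h (h \<pi>) = \<pi>" if "\<pi> \<in> VF \<rightarrow>\<^sub>E {..<r}" for \<pi>
  proof
    fix v show "h (h \<pi>) v = \<pi> v" using that tt unfolding h_def by (auto simp: PiE_iff extensional_def)
  qed
  have hg: "goodcol r VF EF (h \<pi>)" if g: "goodcol r VF EF \<pi>" for \<pi>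
  proof -
    have pi: "\<pi> \<in> VF \<rightarrow>\<^sub>E {..<r}" using g unfolding goodcol_def by simp
    then have pir: "\<forall>v\<in>VF. \<pi> v < r" by auto
    obtain x y where xy: "{x,y} \<in> EF" "x \<noteq> y" "\<pi> x = 0" "\<pi> y = 0"
      and uniq: "\<forall>u v. {u,v} \<in> EF \<and> u \<noteq> v \<and> \<pi> u = \<pi> v \<longrightarrow> {u,v} = {x,y}"
      using g unfolding goodcol_def by blast
    have xyV: "x \<in> VF" "y \<in> VF" using is_graph_edge_sub[OF G xy(1)] by auto
    have "h \<pi> \<in> VF \<rightarrow>\<^sub>E {..<r}" using pir tr unfolding h_def by auto
    moreover have "\<forall>u v. {u,v} \<in> EF \<and> u \<noteq> v \<and> h \<pi> u = h \<pi> v \<longrightarrow> {u,v} = {x,y}"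
    proof (intro allI impI)
      fix u v assume a: "{u,v} \<in> EF \<and> u \<noteq> v \<and> h \<pi> u = h \<pi> v"
      then have "u \<in> VF" "v \<in> VF" using is_graph_edge_sub[OF G] by auto
      then have "\<pi> u = \<pi> v" using a tinj unfolding h_def by simp
      then show "{u,v} = {x,y}" using uniq a by blast
    qed
    moreover have "h \<pi> x = 0" "h \<pi> y = 0" using xy xyV t0 unfolding h_def by auto
    ultimately show ?thesis unfolding goodcol_def using xy by blast
  qed
  show ?thesis
  proof (rule sum.reindex_bij_witness[where i = h and j = h])
    fix \<pi> assume "\<pi> \<in> {\<pi>. goodcol r VF EF \<pi>}"
    then have g: "goodcol r VF EF \<pi>" and pi: "\<pi> \<in> VF \<rightarrow>\<^sub>E {..<r}" unfolding goodcol_def by auto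
    show "h (h \<pi>) = \<pi>" by (rule hh[OF pi])
    show "h \<pi> \<in> {\<pi>. goodcol r VF EF \<pi>}" using hg[OF g] by simp
    have "{v\<in>VF. h \<pi> v = 1} = {v\<in>VF. \<pi> v = i}" unfolding h_def tau_def using i1 by auto
    moreover have "sh 1 = sh i" using i1 by (simp add: sh_def)
    ultimately show "kk VF (h \<pi>) 1 = kk VF \<pi> i" unfolding kk_def by simp
  next
    fix \<pi> assume "\<pi> \<in> {\<pi>. goodcol r VF EF \<pi>}"
    then have g: "goodcol r VF EF \<pi>" and pi: "\<pi> \<in> VF \<rightarrow>\<^sub>E {..<r}" unfolding goodcol_def by auto
    show "h (h \<pi>) = \<pi>" by (rule hh[OF pi])
    show "h \<pi> \<in> {\<pi>. goodcol r VF EF \<pi>}" using hg[OF g] by simp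
  qed
qed


lemma bal:
  assumes r0: "r > 0" and s: "(\<Sum>i<r. n' i) = (n::nat)" and b: "\<forall>i<r. \<forall>j<r. \<bar>int (n' i) - int (n' j)\<bar> \<le> 1"
    and i: "i < r"
  shows "\<bar>real (n' i) - real n / real r\<bar> \<le> 1"
proof -
  have bj: "\<And>j. j < r \<Longrightarrow> real (n' j) \<le> real (n' i) + 1 \<and> real (n' i) \<le> real (n' j) + 1"
  proof -
    fix j assume "j < r"
    then have "\<bar>int (n' i) - int (n' j)\<bar> \<le> 1" using b i by blast
    then show "real (n' j) \<le> real (n' i) + 1 \<and> real (n' i) \<le> real (n' j) + 1" by linarith
  qed
  have sr: "real n = (\<Sum>j<r. real (n' j))" using s by (metis of_nat_sum)
  have "real n \<le> (\<Sum>j<r. real (n' i) + 1)" unfolding sr using bj by (intro sum_mono) auto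
  then have u: "real n \<le> real r * (real (n' i) + 1)" by simp
  have "(\<Sum>j<r. real (n' i) - 1) \<le> real n" unfolding sr using bj by (intro sum_mono) (auto simp: algebra_simps)
  then have l: "real r * (real (n' i) - 1) \<le> real n" by simp
  have rp: "real r > 0" using r0 by simp
  from u l rp show ?thesis by (auto simp: abs_le_iff field_simps)
qed

definition Iset :: "nat \<Rightarrow> 'f set \<Rightarrow> ('f \<Rightarrow> nat) \<Rightarrow> (nat \<times> nat) set" where
  "Iset r VF \<pi> = (SIGMA i:{..<r}. {..<kk VF \<pi> i})"

lemma emb_real:
  assumes G: "is_graph VF EF" and chi: "chromatic_number VF EF = r + 1" and n2: "ns 0 \<ge> 2" and r0: "r > 0"
  shows "real (card (embs (part_vertices r ns) (part_edges_plus r ns) VF EF))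
     = (\<Sum>\<pi>\<in>{\<pi>. goodcol r VF EF \<pi>}. 2 * (\<Prod>z\<in>Iset r VF \<pi>. real (ns (fst z)) - real (sh (fst z)) - real (snd z)))"
proof -
  have "real (\<Prod>i<r. ffc (ns i - sh i) (kk VF \<pi> i)) = (\<Prod>z\<in>Iset r VF \<pi>. real (ns (fst z)) - real (sh (fst z)) - real (snd z))" for \<pi>
  proof -
    have "real (\<Prod>i<r. ffc (ns i - sh i) (kk VF \<pi> i)) = (\<Prod>i<r. \<Prod>j<kk VF \<pi> i. real (ns i - sh i) - real j)"
      by (simp add: real_ffc)
    also have "\<dots> = (\<Prod>i<r. \<Prod>j<kk VF \<pi> i. real (ns i) - real (sh i) - real j)"
    proof (intro prod.cong refl)
      fix i j assume "i \<in> {..<r}"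
      have "sh i \<le> ns i" using n2 by (simp add: sh_def)
      then show "real (ns i - sh i) - real j = real (ns i) - real (sh i) - real j" by (simp add: of_nat_diff)
    qed
    also have "\<dots> = (\<Prod>z\<in>Iset r VF \<pi>. real (ns (fst z)) - real (sh (fst z)) - real (snd z))"
      unfolding Iset_def by (subst prod.Sigma) (auto simp: case_prod_beta)
    finally show ?thesis .
  qed
  then show ?thesis using embs_formula[where ns=ns, OF G chi n2 r0] by simp
qed

lemma card_Iset:
  assumes "finite VF" "goodcol r VF EF \<pi>" "is_graph VF EF"
  shows "card (Iset r VF \<pi>) = card VF - 2" "finite (Iset r VF \<pi>)"
  using sum_kk[OF assms] unfolding Iset_def by (simp_all add: card_SigmaI)

lemma sum_Iset:
  "(\<Sum>z\<in>Iset r VF \<pi>. (a::nat \<Rightarrow> real) (fst z)) = (\<Sum>i<r. real (kk VF \<pi> i) * a i)"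
proof -
  have "(\<Sum>i<r. \<Sum>j<kk VF \<pi> i. a i) = (\<Sum>z\<in>Iset r VF \<pi>. a (fst z))"
    unfolding Iset_def by (subst sum.Sigma) (auto simp: case_prod_beta)
  then show ?thesis by (simp add: mult.commute)
qed


theorem lemma2:
  fixes r :: nat and VF :: "'f set" and EF :: "'f set set"
  assumes "r \<ge> 2" and "is_graph VF EF" and "r_critical r VF EF"
  shows "\<exists>\<zeta> :: real. \<exists>C :: real. \<forall>\<delta> :: real. \<delta> > 0 \<longrightarrow> (\<exists>n0 :: nat. \<forall>n > n0.
     \<forall>n' ns :: nat \<Rightarrow> nat.
       (\<Sum>i<r. n' i) = n \<and> (\<forall>i<r. \<forall>j<r. \<bar>int (n' i) - int (n' j)\<bar> \<le> 1) \<and>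
       c_part r n' VF EF = c_turan r n VF EF \<and>
       (\<Sum>i<r. ns i) = n \<and>
       real (Max {nat \<bar>int (ns i) - int (n' i)\<bar> | i. i < r}) < \<delta> * real n
       \<longrightarrow>
       \<bar>(real (c_turan r n VF EF) - real (c_part r ns VF EF))
          - \<zeta> * real_of_int (int (ns 0) - int (n' 0)) * real n powi (int (card VF) - 3)\<bar>
        \<le> C * (real (Max {nat \<bar>int (ns i) - int (n' i)\<bar> | i. i < r}))^2
              * real n powi (int (card VF) - 4))"
proof -
  have r2: "r \<ge> 2" and G: "is_graph VF EF" using assms by auto
  have r0: "r > 0" using r2 by simp
  have chi: "chromatic_number VF EF = r + 1" using assms(3) unfolding r_critical_def by simp
  have fVF: "finite VF" using G unfolding is_graph_def by simp
  have f3: "card VF \<ge> 3"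
  proof (rule ccontr)
    assume "\<not> card VF \<ge> 3"
    then have cl: "card VF \<le> r" using r2 by simp
    obtain g where g: "bij_betw g VF {0..<card VF}" using ex_bij_betw_finite_nat[OF fVF] by blast
    have "colorable VF EF r" unfolding colorable_def
    proof (rule exI[of _ g], intro conjI allI impI ballI)
      fix v assume "v \<in> VF"
      then have "g v \<in> {0..<card VF}" using g by (auto simp: bij_betw_def)
      then show "g v < r" using cl by simp
    next
      fix u v assume uv: "{u, v} \<in> EF \<and> u \<noteq> v"
      then have "u \<in> VF" "v \<in> VF" using is_graph_edge_sub[OF G] by auto
      then show "g u \<noteq> g v" using uv g by (auto simp: bij_betw_def dest: inj_onD)
    qed
    then show False using not_colorable[OF chi] by simp
  qed
  define d where "d = card VF - 2"
  have d1: "d \<ge> 1" using f3 by (simp add: d_def)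
  define aut where "aut = real (card (auts VF EF))"
  have aut1: "aut \<ge> 1" using auts_pos[OF G] by (simp add: aut_def)
  define P where "P = {\<pi>. goodcol r VF EF \<pi>}"
  have fP: "finite P" unfolding P_def by (rule finite_goodcol[OF fVF])
  define Lam where "Lam = (\<lambda>i. \<Sum>\<pi>\<in>P. 2 * real (kk VF \<pi> i))"
  define \<zeta> where "\<zeta> = - (Lam 0 - Lam 1) / (aut * real r ^ (d - 1))"
  obtain Cd where Cd0: "Cd \<ge> 0" and CdH: "\<forall>(I::(nat\<times>nat) set) \<beta> \<alpha> u M. finite I \<and> card I = d \<and> u \<ge> 1 \<and> M \<ge> 1 \<and> M \<le> real r*u \<and>
     (\<forall>i\<in>I. \<bar>\<beta> i\<bar> \<le> real (card VF) + 3 \<and> \<bar>\<alpha> i\<bar> \<le> M) \<longrightarrow>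
     \<bar>(\<Prod>i\<in>I. u + \<beta> i + \<alpha> i) - (\<Prod>i\<in>I. u + \<beta> i) - u^(d-1) * (\<Sum>i\<in>I. \<alpha> i)\<bar> * u^2
       \<le> Cd * M^2 * u^d"
    using key_prod[of "real (card VF) + 3" "real r" d] by auto
  define C1 where "C1 = 2 * real (card P) * Cd * real r ^ 2 / aut"
  define C2 where "C2 = 2 * real (card P) * 4 * real r ^ 2 / aut + \<bar>\<zeta>\<bar> * 2 * real r"
  have C10: "C1 \<ge> 0" using Cd0 aut1 by (simp add: C1_def)
  have C20: "C2 \<ge> 0" using aut1 by (simp add: C2_def)
  show ?thesis
  proof (rule exI[of _ \<zeta>], rule exI[of _ "C1 + C2"], intro allI impI exI[of _ "4 * r"])
    fix \<delta> :: real and n :: nat and n' ns :: "nat \<Rightarrow> nat"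
    assume "\<delta> > 0"
    assume n: "n > 4 * r"
    assume H: "(\<Sum>i<r. n' i) = n \<and> (\<forall>i<r. \<forall>j<r. \<bar>int (n' i) - int (n' j)\<bar> \<le> 1) \<and>
       c_part r n' VF EF = c_turan r n VF EF \<and> (\<Sum>i<r. ns i) = n \<and>
       real (Max {nat \<bar>int (ns i) - int (n' i)\<bar> | i. i < r}) < \<delta> * real n"
    then have sn': "(\<Sum>i<r. n' i) = n" and bal': "\<forall>i<r. \<forall>j<r. \<bar>int (n' i) - int (n' j)\<bar> \<le> 1"
      and ct: "c_part r n' VF EF = c_turan r n VF EF" and sns: "(\<Sum>i<r. ns i) = n" by auto
    define Mn where "Mn = Max {nat \<bar>int (ns i) - int (n' i)\<bar> | i. i < r}"
    define M where "M = real Mn"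
    define a where "a = (\<lambda>i. real (ns i) - real (n' i))"
    define u where "u = real n / real r"
    define Q where "Q = real n ^ d / real n ^ 2"
    have nr: "real n > 4 * real r" using n by (metis of_nat_less_iff of_nat_mult of_nat_numeral)
    have rpos: "real r > 0" using r0 by simp
    have npos: "real n > 0" using nr rpos by linarith
    have u4: "u > 4" unfolding u_def using nr rpos by (simp add: field_simps)
    have nu: "real n = real r * u" unfolding u_def using rpos by simp
    have balu: "\<And>i. i < r \<Longrightarrow> \<bar>real (n' i) - u\<bar> \<le> 1" unfolding u_def using bal[OF r0 sn' bal'] by blast
    have Mset: "{nat \<bar>int (ns i) - int (n' i)\<bar> | i. i < r} = (\<lambda>i. nat \<bar>int (ns i) - int (n' i)\<bar>) ` {..<r}" by auto
    have aM: "\<And>i. i < r \<Longrightarrow> \<bar>a i\<bar> \<le> M"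
    proof -
      fix i assume i: "i < r"
      have "nat \<bar>int (ns i) - int (n' i)\<bar> \<le> Mn" unfolding Mn_def Mset using i by (intro Max_ge) auto
      then have "real (nat \<bar>int (ns i) - int (n' i)\<bar>) \<le> M" unfolding M_def by linarith
      moreover have "real (nat \<bar>int (ns i) - int (n' i)\<bar>) = \<bar>a i\<bar>" unfolding a_def by simp
      ultimately show "\<bar>a i\<bar> \<le> M" by simp
    qed
    have Mn_le: "M \<le> real n"
    proof -
      have "Mn \<in> (\<lambda>i. nat \<bar>int (ns i) - int (n' i)\<bar>) ` {..<r}" unfolding Mn_def Mset using r0 by (intro Max_in) auto
      then obtain i where i: "i < r" and Mi: "Mn = nat \<bar>int (ns i) - int (n' i)\<bar>" by auto
      have "ns i \<le> n" using sns i by (metis finite_lessThan lessThan_iff member_le_sum zero_le)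
      moreover have "n' i \<le> n" using sn' i by (metis finite_lessThan lessThan_iff member_le_sum zero_le)
      ultimately have "Mn \<le> n" using Mi by linarith
      then show ?thesis unfolding M_def by simp
    qed
    have M0: "M \<ge> 0" unfolding M_def by simp
    have suma: "(\<Sum>i<r. a i) = 0" unfolding a_def using sn' sns by (simp add: sum_subtractf flip: of_nat_sum)
    have pw3: "real n powi (int (card VF) - 3) = real n ^ (d - 1)"
    proof -
      have "int (card VF) - 3 = int (d - 1)" using f3 unfolding d_def by simp
      then show ?thesis by (simp add: power_int_of_nat)
    qed
    have pw4: "real n powi (int (card VF) - 4) = Q"
    proof -
      have "int (card VF) - 4 = int d - 2" using f3 unfolding d_def by simp
      then have "real n powi (int (card VF) - 4) = real n powi int d / real n powi 2"
        using npos by (simp add: power_int_diff)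
      then show ?thesis unfolding Q_def by (simp add: power_int_of_nat)
    qed
    have Qpos: "Q > 0" unfolding Q_def using npos by simp
    have ndQ: "real n ^ d = real n ^ 2 * Q" unfolding Q_def using npos by simp
    have nd1Q: "real n ^ (d - 1) = real n * Q" unfolding Q_def using npos d1
      by (simp add: field_simps power_eq_if)
    have cpart: "\<And>ms. real (c_part r ms VF EF) = real (card (embs (part_vertices r ms) (part_edges_plus r ms) VF EF)) / aut"
    proof -
      fix ms :: "nat \<Rightarrow> nat"
      have "part_vertices r ms = Sigma {..<r} (\<lambda>i. {..<ms i})" unfolding part_vertices_def by auto
      then have fV: "finite (part_vertices r ms)" by simp
      show "real (c_part r ms VF EF) = real (card (embs (part_vertices r ms) (part_edges_plus r ms) VF EF)) / aut"
        unfolding c_part_def aut_def using emb_count[OF G fV, of "part_edges_plus r ms"] aut1 aut_def by simp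
    qed
    define X where "X = real (card (embs (part_vertices r n') (part_edges_plus r n') VF EF))"
    define Y where "Y = real (card (embs (part_vertices r ns) (part_edges_plus r ns) VF EF))"
    have goal_eq: "\<bar>(real (c_turan r n VF EF) - real (c_part r ns VF EF))
          - \<zeta> * real_of_int (int (ns 0) - int (n' 0)) * real n powi (int (card VF) - 3)\<bar>
        = \<bar>(X - Y) / aut - \<zeta> * a 0 * real n ^ (d - 1)\<bar>"
      using cpart[of n'] cpart[of ns] ct pw3 unfolding X_def Y_def a_def by (simp add: diff_divide_distrib)
    have n'02: "n' 0 \<ge> 2" using balu[OF r0] u4 by linarith
    have "\<bar>(X - Y) / aut - \<zeta> * a 0 * real n ^ (d - 1)\<bar> \<le> (C1 + C2) * M^2 * Q"
    proof -
    have Xbound: "X \<le> 2 * real (card P) * real n ^ d"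
    proof -
      have n'02': "n' 0 \<ge> 2" by (rule n'02)
      have "card (embs (part_vertices r n') (part_edges_plus r n') VF EF)
         = (\<Sum>\<pi>\<in>P. 2 * (\<Prod>i<r. ffc (n' i - sh i) (kk VF \<pi> i)))"
        unfolding P_def by (rule embs_formula[where ns=n', OF G chi n'02' r0])
      also have "\<dots> \<le> (\<Sum>\<pi>\<in>P. 2 * n ^ d)"
      proof (rule sum_mono)
        fix \<pi> assume "\<pi> \<in> P"
        then have gc: "goodcol r VF EF \<pi>" unfolding P_def by simp
        have "(\<Prod>i<r. ffc (n' i - sh i) (kk VF \<pi> i)) \<le> (\<Prod>i<r. n ^ kk VF \<pi> i)"
        proof (rule prod_mono, rule conjI)
          fix i assume i: "i \<in> {..<r}"
          have "n' i \<le> n" using sn' i by (metis finite_lessThan member_le_sum zero_le)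
          then have "n' i - sh i \<le> n" by simp
          then show "ffc (n' i - sh i) (kk VF \<pi> i) \<le> n ^ kk VF \<pi> i"
            using ffc_le[of "n' i - sh i" "kk VF \<pi> i"] power_mono[of "n' i - sh i" n] by (meson le_trans zero_le)
        qed simp
        also have "\<dots> = n ^ d" using sum_kk[OF fVF gc G] by (simp add: power_sum[symmetric] d_def)
        finally show "2 * (\<Prod>i<r. ffc (n' i - sh i) (kk VF \<pi> i)) \<le> 2 * n ^ d" by simp
      qed
      also have "\<dots> = card P * 2 * n ^ d" by simp
      finally show ?thesis unfolding X_def by (metis (mono_tags, lifting) mult.commute mult.left_commute of_nat_le_iff of_nat_mult of_nat_numeral of_nat_power)
    qed
    have X0: "X \<ge> 0" unfolding X_def by simp
    show "\<bar>(X - Y) / aut - \<zeta> * a 0 * real n ^ (d - 1)\<bar> \<le> (C1 + C2) * M^2 * Q"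
    proof (cases "ns 0 < 2")
      case True
      have Y0: "Y = 0" unfolding Y_def using embs_zero[where ns=ns, OF G chi True] by simp
      have a0: "a 0 \<le> 2 - u" unfolding a_def using True balu[OF r0] by linarith
      then have Mu: "M \<ge> u / 2" using aM[OF r0] u4 by linarith
      then have nM: "real n \<le> 2 * real r * M" using nu rpos by (simp add: field_simps)
      have t1: "X / aut \<le> 2 * real (card P) * 4 * real r ^ 2 / aut * M^2 * Q"
      proof -
        have "X \<le> 2 * real (card P) * (real n ^ 2 * Q)" using Xbound ndQ by simp
        also have "\<dots> \<le> 2 * real (card P) * ((2 * real r * M)^2 * Q)"
          using nM npos Qpos by (intro mult_left_mono mult_right_mono power_mono) auto
        finally have "X \<le> 2 * real (card P) * 4 * real r ^ 2 * M^2 * Q" by (simp add: power_mult_distrib)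
        then show ?thesis using aut1 by (simp add: field_simps)
      qed
      have t2: "\<bar>\<zeta> * a 0 * real n ^ (d - 1)\<bar> \<le> \<bar>\<zeta>\<bar> * 2 * real r * M^2 * Q"
      proof -
        have "\<bar>\<zeta> * a 0 * real n ^ (d - 1)\<bar> = \<bar>\<zeta>\<bar> * \<bar>a 0\<bar> * (real n * Q)" using nd1Q npos Qpos by (simp add: abs_mult)
        also have "\<dots> \<le> \<bar>\<zeta>\<bar> * M * ((2 * real r * M) * Q)"
          using aM[OF r0] nM Qpos M0 by (intro mult_mono mult_left_mono mult_right_mono) auto
        finally show ?thesis by (simp add: power2_eq_square algebra_simps)
      qed
      have "\<bar>(X - Y) / aut - \<zeta> * a 0 * real n ^ (d - 1)\<bar> \<le> X / aut + \<bar>\<zeta> * a 0 * real n ^ (d - 1)\<bar>"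
      proof -
        have "X / aut \<ge> 0" using X0 aut1 by simp
        then show ?thesis using Y0 abs_triangle_ineq4[of "X / aut" "\<zeta> * a 0 * real n ^ (d - 1)"] by (simp del: abs_divide)
      qed
      also have "\<dots> \<le> C2 * M^2 * Q" using t1 t2 unfolding C2_def by (simp add: algebra_simps)
      also have "\<dots> \<le> (C1 + C2) * M^2 * Q" using C10 Qpos by (simp add: algebra_simps)
      finally show ?thesis .
    next
      case False
      then have ns02: "ns 0 \<ge> 2" by simp
      define \<beta> where "\<beta> = (\<lambda>z::nat\<times>nat. real (n' (fst z)) - real (sh (fst z)) - real (snd z) - u)"
      define \<alpha> where "\<alpha> = (\<lambda>z::nat\<times>nat. a (fst z))"
      define D where "D = (\<lambda>\<pi>. (\<Prod>z\<in>Iset r VF \<pi>. u + \<beta> z + \<alpha> z) - (\<Prod>z\<in>Iset r VF \<pi>. u + \<beta> z)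
                             - u^(d-1) * (\<Sum>z\<in>Iset r VF \<pi>. \<alpha> z))"
      have Xe: "X = (\<Sum>\<pi>\<in>P. 2 * (\<Prod>z\<in>Iset r VF \<pi>. u + \<beta> z))"
      proof -
        have be: "\<And>z. u + \<beta> z = real (n' (fst z)) - real (sh (fst z)) - real (snd z)" by (simp add: \<beta>_def)
        show ?thesis by (simp only: X_def P_def emb_real[where ns=n', OF G chi n'02 r0] be)
      qed
      have Ye: "Y = (\<Sum>\<pi>\<in>P. 2 * (\<Prod>z\<in>Iset r VF \<pi>. u + \<beta> z + \<alpha> z))"
      proof -
        have be: "\<And>z. u + \<beta> z + \<alpha> z = real (ns (fst z)) - real (sh (fst z)) - real (snd z)" by (simp add: \<beta>_def \<alpha>_def a_def)
        show ?thesis by (simp only: Y_def P_def emb_real[where ns=ns, OF G chi ns02 r0] be)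
      qed
      have Dbound: "\<bar>D \<pi>\<bar> * u^2 \<le> Cd * M^2 * u^d" if "\<pi> \<in> P" for \<pi>
      proof -
        have gc: "goodcol r VF EF \<pi>" using that unfolding P_def by simp
        have fI: "finite (Iset r VF \<pi>)" and cI: "card (Iset r VF \<pi>) = d"
          using card_Iset[OF fVF gc G] by (auto simp: d_def)
        have zr: "\<And>z. z \<in> Iset r VF \<pi> \<Longrightarrow> fst z < r \<and> snd z < kk VF \<pi> (fst z)" unfolding Iset_def by auto
        show ?thesis
        proof (cases "M = 0")
          case True
          then have "\<And>z. z \<in> Iset r VF \<pi> \<Longrightarrow> \<alpha> z = 0" using aM zr unfolding \<alpha>_def by fastforce
          then have "D \<pi> = 0" unfolding D_def by simp
          then show ?thesis using Cd0 u4 by simp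
        next
          case False
          then have M1: "M \<ge> 1" unfolding M_def by simp
          have bb: "\<forall>z\<in>Iset r VF \<pi>. \<bar>\<beta> z\<bar> \<le> real (card VF) + 3 \<and> \<bar>\<alpha> z\<bar> \<le> M"
          proof
            fix z assume z: "z \<in> Iset r VF \<pi>"
            have kz: "kk VF \<pi> (fst z) \<le> card VF"
            proof -
              have "card {v\<in>VF. \<pi> v = fst z} \<le> card VF" using fVF by (intro card_mono) auto
              then show ?thesis unfolding kk_def by simp
            qed
            have "real (snd z) \<le> real (card VF)" using zr[OF z] kz by simp
            moreover have "real (sh (fst z)) \<le> 2" by (simp add: sh_def)
            moreover have "\<bar>real (n' (fst z)) - u\<bar> \<le> 1" using balu zr[OF z] by blast
            ultimately have "\<bar>\<beta> z\<bar> \<le> real (card VF) + 3" unfolding \<beta>_def by (simp add: abs_le_iff)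
            moreover have "\<bar>\<alpha> z\<bar> \<le> M" unfolding \<alpha>_def using aM zr[OF z] by blast
            ultimately show "\<bar>\<beta> z\<bar> \<le> real (card VF) + 3 \<and> \<bar>\<alpha> z\<bar> \<le> M" by simp
          qed
          have "M \<le> real r * u" using Mn_le nu by simp
          moreover have "u \<ge> 1" using u4 by simp
          ultimately have hyp: "finite (Iset r VF \<pi>) \<and> card (Iset r VF \<pi>) = d \<and> u \<ge> 1 \<and> M \<ge> 1 \<and> M \<le> real r * u \<and>
             (\<forall>z\<in>Iset r VF \<pi>. \<bar>\<beta> z\<bar> \<le> real (card VF) + 3 \<and> \<bar>\<alpha> z\<bar> \<le> M)"
            using fI cI M1 bb by simp
          show ?thesis unfolding D_def by (rule CdH[rule_format, OF hyp])
        qed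
      qed
      have Lsym: "\<And>i. 1 \<le> i \<Longrightarrow> i < r \<Longrightarrow> Lam i = Lam 1"
      proof -
        fix i assume "1 \<le> i" "i < r"
        from Lam_sym[OF this G] have "(\<Sum>\<pi>\<in>P. kk VF \<pi> i) = (\<Sum>\<pi>\<in>P. kk VF \<pi> 1)" unfolding P_def .
        then have "real (\<Sum>\<pi>\<in>P. kk VF \<pi> i) = real (\<Sum>\<pi>\<in>P. kk VF \<pi> 1)" by simp
        then show "Lam i = Lam 1" unfolding Lam_def by (simp add: sum_distrib_left[symmetric])
      qed
      have sumalpha: "(\<Sum>\<pi>\<in>P. 2 * (\<Sum>z\<in>Iset r VF \<pi>. \<alpha> z)) = a 0 * (Lam 0 - Lam 1)"
      proof -
        have "(\<Sum>\<pi>\<in>P. 2 * (\<Sum>z\<in>Iset r VF \<pi>. \<alpha> z)) = (\<Sum>\<pi>\<in>P. \<Sum>i<r. 2 * real (kk VF \<pi> i) * a i)"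
          unfolding \<alpha>_def sum_Iset by (simp add: sum_distrib_left mult.assoc)
        also have "\<dots> = (\<Sum>i<r. \<Sum>\<pi>\<in>P. 2 * real (kk VF \<pi> i) * a i)" by (rule sum.swap)
        also have "\<dots> = (\<Sum>i<r. Lam i * a i)" unfolding Lam_def by (simp add: sum_distrib_right)
        also have "\<dots> = Lam 0 * a 0 + (\<Sum>i\<in>{1..<r}. Lam i * a i)"
        proof -
          have "{..<r} = insert 0 {1..<r}" using r0 by auto
          then show ?thesis by simp
        qed
        also have "\<dots> = Lam 0 * a 0 + Lam 1 * (\<Sum>i\<in>{1..<r}. a i)"
        proof -
          have "(\<Sum>i\<in>{1..<r}. Lam i * a i) = (\<Sum>i\<in>{1..<r}. Lam 1 * a i)"
          proof (rule sum.cong[OF refl])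
            fix i assume "i \<in> {1..<r}"
            then have "Lam i = Lam 1" using Lsym[of i] by simp
            then show "Lam i * a i = Lam 1 * a i" by simp
          qed
          then show ?thesis by (simp add: sum_distrib_left)
        qed
        also have "(\<Sum>i\<in>{1..<r}. a i) = - a 0"
        proof -
          have "{..<r} = insert 0 {1..<r}" using r0 by auto
          then have "(\<Sum>i<r. a i) = a 0 + (\<Sum>i\<in>{1..<r}. a i)" by simp
          then show ?thesis using suma by simp
        qed
        finally show ?thesis by (simp add: algebra_simps)
      qed
      have YXD: "Y - X - u^(d-1) * (a 0 * (Lam 0 - Lam 1)) = (\<Sum>\<pi>\<in>P. 2 * D \<pi>)"
      proof -
        define T where "T = (\<lambda>\<pi>. 2 * (\<Prod>z\<in>Iset r VF \<pi>. u + \<beta> z + \<alpha> z))"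
        define T' where "T' = (\<lambda>\<pi>. 2 * (\<Prod>z\<in>Iset r VF \<pi>. u + \<beta> z))"
        define S where "S = (\<lambda>\<pi>. 2 * (\<Sum>z\<in>Iset r VF \<pi>. \<alpha> z))"
        have "\<And>\<pi>. 2 * D \<pi> = T \<pi> - T' \<pi> - u^(d-1) * S \<pi>" unfolding D_def T_def T'_def S_def by (simp add: algebra_simps)
        then have "(\<Sum>\<pi>\<in>P. 2 * D \<pi>) = (\<Sum>\<pi>\<in>P. T \<pi>) - (\<Sum>\<pi>\<in>P. T' \<pi>) - u^(d-1) * (\<Sum>\<pi>\<in>P. S \<pi>)"
          by (simp add: sum_subtractf sum_distrib_left)
        moreover have "(\<Sum>\<pi>\<in>P. T \<pi>) = Y" unfolding Ye T_def ..
        moreover have "(\<Sum>\<pi>\<in>P. T' \<pi>) = X" unfolding Xe T'_def ..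
        moreover have "(\<Sum>\<pi>\<in>P. S \<pi>) = a 0 * (Lam 0 - Lam 1)" unfolding S_def by (rule sumalpha)
        ultimately show ?thesis by simp
      qed
      have sumD: "\<bar>\<Sum>\<pi>\<in>P. 2 * D \<pi>\<bar> * u^2 \<le> 2 * real (card P) * Cd * M^2 * u^d"
      proof -
        have "\<bar>\<Sum>\<pi>\<in>P. 2 * D \<pi>\<bar> * u^2 \<le> (\<Sum>\<pi>\<in>P. 2 * (\<bar>D \<pi>\<bar> * u^2))"
        proof -
          have "\<bar>\<Sum>\<pi>\<in>P. 2 * D \<pi>\<bar> \<le> (\<Sum>\<pi>\<in>P. \<bar>2 * D \<pi>\<bar>)" by (rule sum_abs)
          then have "\<bar>\<Sum>\<pi>\<in>P. 2 * D \<pi>\<bar> * u^2 \<le> (\<Sum>\<pi>\<in>P. \<bar>2 * D \<pi>\<bar>) * u^2" by (intro mult_right_mono) auto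
          then show ?thesis by (simp add: sum_distrib_right abs_mult mult.assoc)
        qed
        also have "\<dots> \<le> (\<Sum>\<pi>\<in>P. 2 * (Cd * M^2 * u^d))" using Dbound by (intro sum_mono) auto
        also have "\<dots> = 2 * real (card P) * Cd * M^2 * u^d" by simp
        finally show ?thesis .
      qed
      have zeta_eq: "\<zeta> * a 0 * real n ^ (d - 1) = - (a 0 * (Lam 0 - Lam 1)) * u^(d-1) / aut"
      proof -
        have "real n ^ (d - 1) = real r ^ (d - 1) * u ^ (d - 1)" using nu by (simp add: power_mult_distrib)
        then show ?thesis unfolding \<zeta>_def using rpos aut1 by (simp add: field_simps)
      qed
      have lhs: "(X - Y) / aut - \<zeta> * a 0 * real n ^ (d - 1) = - (\<Sum>\<pi>\<in>P. 2 * D \<pi>) / aut"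
      proof -
        have "(X - Y) / aut - \<zeta> * a 0 * real n ^ (d - 1) = (X - Y) / aut + (a 0 * (Lam 0 - Lam 1)) * u^(d-1) / aut"
          using zeta_eq by simp
        also have "\<dots> = - (Y - X - u^(d-1) * (a 0 * (Lam 0 - Lam 1))) / aut" using aut1 by (simp add: field_simps)
        also have "\<dots> = - (\<Sum>\<pi>\<in>P. 2 * D \<pi>) / aut" using YXD by simp
        finally show ?thesis .
      qed
      have uQ: "u^d / u^2 \<le> real r ^ 2 * Q"
      proof -
        have "u^d / u^2 = (real n ^ d / real n ^ 2) * (real r ^ 2 / real r ^ d)"
          unfolding u_def using rpos npos by (simp add: power_divide field_simps)
        also have "\<dots> \<le> Q * real r ^ 2"
        proof -
          have "real r ^ d \<ge> 1" using r0 by (simp add: one_le_power)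
          then have "real r ^ 2 / real r ^ d \<le> real r ^ 2" using rpos by (simp add: divide_le_eq)
          then show ?thesis unfolding Q_def using npos by (intro mult_left_mono) auto
        qed
        finally show ?thesis by (simp add: mult.commute)
      qed
      have "\<bar>(X - Y) / aut - \<zeta> * a 0 * real n ^ (d - 1)\<bar> = \<bar>\<Sum>\<pi>\<in>P. 2 * D \<pi>\<bar> / aut"
        unfolding lhs using aut1 by simp
      also have "\<dots> \<le> (2 * real (card P) * Cd * M^2 * u^d / u^2) / aut"
      proof -
        have "\<bar>\<Sum>\<pi>\<in>P. 2 * D \<pi>\<bar> \<le> 2 * real (card P) * Cd * M^2 * u^d / u^2"
          using sumD u4 by (simp add: field_simps)
        then show ?thesis using aut1 by (intro divide_right_mono) auto
      qed
      also have "\<dots> \<le> (2 * real (card P) * Cd * M^2 * (real r ^ 2 * Q)) / aut"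
      proof -
        have "2 * real (card P) * Cd * M^2 * u^d / u^2 = (2 * real (card P) * Cd * M^2) * (u^d / u^2)" by simp
        also have "\<dots> \<le> (2 * real (card P) * Cd * M^2) * (real r ^ 2 * Q)"
          using uQ Cd0 by (intro mult_left_mono) auto
        finally show ?thesis using aut1 by (intro divide_right_mono) auto
      qed
      also have "\<dots> = C1 * M^2 * Q" unfolding C1_def by (simp add: field_simps)
      also have "\<dots> \<le> (C1 + C2) * M^2 * Q" using C20 Qpos by (simp add: algebra_simps)
      finally show ?thesis .
    qed
    qed
    then show "\<bar>(real (c_turan r n VF EF) - real (c_part r ns VF EF))
          - \<zeta> * real_of_int (int (ns 0) - int (n' 0)) * real n powi (int (card VF) - 3)\<bar>
        \<le> (C1 + C2) * (real (Max {nat \<bar>int (ns i) - int (n' i)\<bar> | i. i < r}))^2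
              * real n powi (int (card VF) - 4)"
      using goal_eq pw4 unfolding M_def Mn_def by simp
  qed
qed


end
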